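(* Let $F$ be a nontrivial finite group and let $\tfrac12<p<1$. Let $R_n$ be the stationary random walk on the lamplighter group $F\wr\mathbb{Z}$ with parameter $p$. Then $R_n$ is recurrent if $p\ge\frac{|F|^2}{|F|^2+1}$, and transient if $p<\frac{|F|^2}{|F|^2+1}$.
   Context: Elements of $F\wr\mathbb{Z}$ are pairs $((L(i))_{i\in\mathbb{Z}},x)$ with $L:\mathbb{Z}\to F$ finitely supported (only finitely many $L(i)\neq \mathrm{id}_F$) and $x\in\mathbb{Z}$; the identity is the configuration with all lamps $\mathrm{id}_F$ and $x=0$. The stationary random walk with parameter $p$ is defined as follows. Let $(S_n)_{n\ge0}$ be the Markov chain on $\mathbb{Z}$ with $S_0=0$ and $\Pr(S_{n+1}=x+1\mid S_n=x)$ equal to $p$ if $x<0$, $\tfrac12$ if $x=0$, $1-p$ if $x>0$, and $\Pr(S_{n+1}=x-1\mid S_n=x)$ equal to $1-p$ if $x<0$, $\tfrac12$ if $x=0$, $p$ if $x>0$. Let $(U_n,V_n)_{n\ge1}$ be i.i.d. pairs of independent uniform random elements of $F$, independent of $(S_n)$. Set $L_0\equiv\mathrm{id}_F$ and $R_n=((L_n(i))_i,S_n)$, where $L_{n+1}(i)=L_n(i)$ if $i\notin\{S_n,S_{n+1}\}$, $L_{n+1}(S_n)=U_{n+1}$, and $L_{n+1}(S_{n+1})=V_{n+1}$. Recurrent means $R_n$ returns to the identity infinitely often almost surely; transient means it returns only finitely often almost surely. *)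

theory Defs
  imports "HOL-Probability.Probability" "HOL-Algebra.Group"
begin

text \<open>The boolean c is a
Bernoulli(p) coin (used when x is nonzero), d is a fair coin (used at x = 0).\<close>
definition base_step :: "int \<Rightarrow> bool \<Rightarrow> bool \<Rightarrow> int" where
  "base_step x c d =
     (if x < 0 then (if c then x + 1 else x - 1)
      else if x = 0 then (if d then x + 1 else x - 1)
      else (if c then x - 1 else x + 1))"

definition lamp_noise :: "('a, 'b) monoid_scheme \<Rightarrow> real \<Rightarrow> (bool \<times> bool \<times> 'a \<times> 'a) pmf" where
  "lamp_noise F p = pair_pmf (bernoulli_pmf p)
     (pair_pmf (bernoulli_pmf (1/2)) (pair_pmf (pmf_of_set (carrier F)) (pmf_of_set (carrier F))))"

definition lamp_space :: "('a, 'b) monoid_scheme \<Rightarrow> real \<Rightarrow> (bool \<times> bool \<times> 'a \<times> 'a) stream measure" where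
  "lamp_space F p = stream_space (measure_pmf (lamp_noise F p))"

definition lamp_id :: "('a, 'b) monoid_scheme \<Rightarrow> (int \<Rightarrow> 'a) \<times> int" where
  "lamp_id F = ((\<lambda>i. \<one>\<^bsub>F\<^esub>), 0)"

text \<open>The stationary random walk R_n = (L_n, S_n); the n-th stream entry is
(C_{n+1}, D_{n+1}, U_{n+1}, V_{n+1}).\<close>
fun lamp_walk :: "('a, 'b) monoid_scheme \<Rightarrow> (bool \<times> bool \<times> 'a \<times> 'a) stream \<Rightarrow> nat \<Rightarrow> (int \<Rightarrow> 'a) \<times> int" where
  "lamp_walk F \<omega> 0 = lamp_id F"
| "lamp_walk F \<omega> (Suc n) =
     (let (L, x) = lamp_walk F \<omega> n; (c, d, u, v) = \<omega> !! n; y = base_step x c d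
      in (fun_upd (fun_upd L x u) y v, y))"

definition lamp_recurrent :: "('a, 'b) monoid_scheme \<Rightarrow> real \<Rightarrow> bool" where
  "lamp_recurrent F p =
     (AE \<omega> in lamp_space F p. infinite {n. lamp_walk F \<omega> n = lamp_id F})"

definition lamp_transient :: "('a, 'b) monoid_scheme \<Rightarrow> real \<Rightarrow> bool" where
  "lamp_transient F p =
     (AE \<omega> in lamp_space F p. finite {n. lamp_walk F \<omega> n = lamp_id F})"

end

theory Submission
  imports Defs
begin


definition pl :: "real \<Rightarrow> int \<Rightarrow> real" where
  "pl p x = (if x < 0 then p else if x = 0 then 1/2 else 1 - p)"

fun Epath :: "real \<Rightarrow> nat \<Rightarrow> int \<Rightarrow> (int list \<Rightarrow> real) \<Rightarrow> real" where
  "Epath p 0 x F = F [x]"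
| "Epath p (Suc n) x F = pl p x * Epath p n (x+1) (\<lambda>l. F (x#l)) + (1 - pl p x) * Epath p n (x-1) (\<lambda>l. F (x#l))"

fun nnp :: "int list \<Rightarrow> bool" where
  "nnp [] = False"
| "nnp [x] = True"
| "nnp (x#y#r) = (\<bar>x - y\<bar> = 1 \<and> nnp (y#r))"

lemma nnp_Cons: "nnp l \<Longrightarrow> hd l = y \<Longrightarrow> \<bar>x - y\<bar> = 1 \<Longrightarrow> nnp (x#l)"
  by (cases l) auto

lemma pl_bounds: "0 \<le> p \<Longrightarrow> p \<le> 1 \<Longrightarrow> 0 \<le> pl p x \<and> pl p x \<le> 1"
  by (auto simp: pl_def)

lemma Ex_mono:
  assumes "0 \<le> p" "p \<le> 1"
  shows "(\<And>l. nnp l \<Longrightarrow> hd l = x \<Longrightarrow> length l = Suc n \<Longrightarrow> F l \<le> G l) \<Longrightarrow> Epath p n x F \<le> Epath p n x G"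
proof (induction n arbitrary: x F G)
  case 0
  then show ?case by simp
next
  case (Suc n)
  have b: "0 \<le> pl p x" "0 \<le> 1 - pl p x" using pl_bounds[OF assms] by auto
  have 1: "Epath p n (x+1) (\<lambda>l. F (x#l)) \<le> Epath p n (x+1) (\<lambda>l. G (x#l))"
    apply (rule Suc.IH)
    apply (rule Suc.prems)
    by (auto intro: nnp_Cons)
  have 2: "Epath p n (x-1) (\<lambda>l. F (x#l)) \<le> Epath p n (x-1) (\<lambda>l. G (x#l))"
    apply (rule Suc.IH)
    apply (rule Suc.prems)
    by (auto intro: nnp_Cons)
  show ?case using mult_left_mono[OF 1 b(1)] mult_left_mono[OF 2 b(2)] by simp
qed

lemma Ex_cong:
  "(\<And>l. nnp l \<Longrightarrow> hd l = x \<Longrightarrow> length l = Suc n \<Longrightarrow> F l = G l) \<Longrightarrow> Epath p n x F = Epath p n x G"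
proof (induction n arbitrary: x F G)
  case 0
  then show ?case by simp
next
  case (Suc n)
  have 1: "Epath p n (x+1) (\<lambda>l. F (x#l)) = Epath p n (x+1) (\<lambda>l. G (x#l))"
    apply (rule Suc.IH)
    apply (rule Suc.prems)
    by (auto intro: nnp_Cons)
  have 2: "Epath p n (x-1) (\<lambda>l. F (x#l)) = Epath p n (x-1) (\<lambda>l. G (x#l))"
    apply (rule Suc.IH)
    apply (rule Suc.prems)
    by (auto intro: nnp_Cons)
  show ?case using 1 2 by simp
qed

lemma Ex_add: "Epath p n x (\<lambda>l. F l + G l) = Epath p n x F + Epath p n x G"
  by (induction n arbitrary: x F G) (auto simp: algebra_simps)

lemma Ex_cmult: "Epath p n x (\<lambda>l. c * F l) = c * Epath p n x F"
  by (induction n arbitrary: x F) (auto simp: algebra_simps)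

lemma Ex_diff: "Epath p n x (\<lambda>l. F l - G l) = Epath p n x F - Epath p n x G"
  using Ex_add[of p n x F "\<lambda>l. (-1) * G l"] Ex_cmult[of p n x "-1" G] by simp

lemma Ex_const: "Epath p n x (\<lambda>l. c) = c"
  by (induction n arbitrary: x) (auto simp: algebra_simps)

lemma Ex_sum: "finite A \<Longrightarrow> Epath p n x (\<lambda>l. \<Sum>i\<in>A. F i l) = (\<Sum>i\<in>A. Epath p n x (F i))"
  by (induction A rule: finite_induct) (auto simp: Ex_add Ex_const)

lemma Ex_nonneg:
  assumes "0 \<le> p" "p \<le> 1" "\<And>l. nnp l \<Longrightarrow> hd l = x \<Longrightarrow> length l = Suc n \<Longrightarrow> 0 \<le> F l"
  shows "0 \<le> Epath p n x F"
  using Ex_mono[OF assms(1,2), of x n "\<lambda>_. 0" F] assms(3) by (simp add: Ex_const)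

lemma Ex_last:
  "Epath p (Suc k) x F = Epath p k x (\<lambda>l. pl p (last l) * F (l @ [last l + 1]) + (1 - pl p (last l)) * F (l @ [last l - 1]))"
proof (induction k arbitrary: x F)
  case 0
  then show ?case by simp
next
  case (Suc k)
  let ?G = "\<lambda>l. pl p (last l) * F (l @ [last l + 1]) + (1 - pl p (last l)) * F (l @ [last l - 1])"
  have "Epath p (Suc (Suc k)) x F = pl p x * Epath p (Suc k) (x+1) (\<lambda>l. F (x#l)) + (1 - pl p x) * Epath p (Suc k) (x-1) (\<lambda>l. F (x#l))"
    by (rule Epath.simps(2))
  also have "\<dots> = pl p x * Epath p k (x+1) (\<lambda>l. ?G (x#l)) + (1 - pl p x) * Epath p k (x-1) (\<lambda>l. ?G (x#l))"
    apply (simp only: Suc.IH)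
    apply (intro arg_cong2[where f="(+)"] arg_cong2[where f="(*)"] refl Ex_cong)
    by (auto simp: neq_Nil_conv)
  also have "\<dots> = Epath p (Suc k) x ?G"
    by (rule Epath.simps(2)[symmetric])
  finally show ?case .
qed

definition QI :: "real \<Rightarrow> int set \<Rightarrow> (int \<Rightarrow> real) \<Rightarrow> int \<Rightarrow> real" where
  "QI p I g x = pl p x * (if x+1 \<in> I then g (x+1) else 0) + (1 - pl p x) * (if x-1 \<in> I then g (x-1) else 0)"

lemma Ex_QI:
  "Epath p (Suc k) x (\<lambda>l. if set l \<subseteq> I then g (last l) else 0) = Epath p k x (\<lambda>l. if set l \<subseteq> I then QI p I g (last l) else 0)"
  apply (subst Ex_last)
  apply (rule Ex_cong)
  by (auto simp: QI_def)

lemma Ex_tel: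
  assumes "x \<in> I"
  shows "(\<Sum>k<N. Epath p k x (\<lambda>l. if set l \<subseteq> I then g (last l) - QI p I g (last l) else 0))
       = g x - Epath p N x (\<lambda>l. if set l \<subseteq> I then g (last l) else 0)"
proof (induction N)
  case 0
  then show ?case using assms by simp
next
  case (Suc N)
  have "Epath p N x (\<lambda>l. if set l \<subseteq> I then g (last l) - QI p I g (last l) else 0)
     = Epath p N x (\<lambda>l. (if set l \<subseteq> I then g (last l) else 0) - (if set l \<subseteq> I then QI p I g (last l) else 0))"
    by (rule Ex_cong) auto
  also have "\<dots> = Epath p N x (\<lambda>l. if set l \<subseteq> I then g (last l) else 0) - Epath p (Suc N) x (\<lambda>l. if set l \<subseteq> I then g (last l) else 0)"
    by (simp only: Ex_diff Ex_QI)
  finally show ?case using Suc by simp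
qed

lemma Ex_decr:
  assumes "0 \<le> p" "p \<le> 1"
  shows "Epath p (Suc k) x (\<lambda>l. if set l \<subseteq> I then 1 else 0) \<le> Epath p k x (\<lambda>l. if set l \<subseteq> I then 1 else 0)"
proof -
  have "Epath p (Suc k) x (\<lambda>l. if set l \<subseteq> I then 1 else 0) = Epath p k x (\<lambda>l. if set l \<subseteq> I then QI p I (\<lambda>_. 1) (last l) else 0)"
    using Ex_QI[of p k x I "\<lambda>_. 1"] by simp
  also have "\<dots> \<le> Epath p k x (\<lambda>l. if set l \<subseteq> I then 1 else 0)"
    apply (rule Ex_mono[OF assms])
    using pl_bounds[OF assms] by (auto simp: QI_def)
  finally show ?thesis .
qed



lemma r_facts:
  fixes p r :: real
  assumes "1/2 < p" "p < 1" "r = p/(1-p)"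
  shows "1 < r" "(1-p) * r = p" "(1-p) * r^2 + p = r"
proof -
  have "0 < 1 - p" "1 - p < p" using assms by auto
  then show "1 < r" using assms(3) by (simp add: less_divide_eq_1_pos)
  show rq: "(1-p) * r = p" using assms by (simp add: field_simps)
  have "(1-p) * r^2 = ((1-p) * r) * r" by (simp add: power2_eq_square algebra_simps)
  also have "\<dots> = p * r" using rq by simp
  finally have e: "(1-p) * r^2 = p * r" .
  have "r - p * r = p" using rq by (simp add: algebra_simps)
  then show "(1-p) * r^2 + p = r" using e by linarith
qed

lemma r_key:
  fixes p r :: real
  assumes "1/2 < p" "p < 1" "r = p/(1-p)" "1 \<le> k"
  shows "(1-p) * r^(k+1) + p * r^(k-1) = r^k"
proof -
  obtain j where k: "k = Suc j" using assms(4) by (cases k) auto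
  have "(1-p) * r^(k+1) + p * r^(k-1) = r^j * ((1-p) * r^2 + p)"
    by (simp add: k) (simp add: power2_eq_square algebra_simps)
  also have "\<dots> = r^k" using r_facts[OF assms(1-3)] by (simp add: k)
  finally show ?thesis .
qed

definition phi :: "real \<Rightarrow> real \<Rightarrow> nat \<Rightarrow> real" where
  "phi r R k = (R - r^k) / (R - 1)"

lemma phi_step:
  assumes "1/2 < p" "p < 1" "r = p/(1-p)" "1 \<le> k"
  shows "(1-p) * phi r R (k+1) + p * phi r R (k-1) = phi r R k"
proof -
  have "(1-p) * phi r R (k+1) + p * phi r R (k-1) = (R - ((1-p) * r^(k+1) + p * r^(k-1))) / (R - 1)"
    by (simp add: phi_def field_simps diff_divide_distrib add_divide_distrib)
  then show ?thesis using r_key[OF assms] by (simp add: phi_def)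
qed

lemma TB:
  assumes p: "1/2 < p" "p < 1" and rdef: "r = p/(1-p)"
  shows "(\<Sum>k<N. Epath p k 0 (\<lambda>l. if set l \<subseteq> {-int a..int b} \<and> last l = 0 then 1 else 0))
         \<le> 2 * r / (r - 1) * min (r^a) (r^b)"
proof -
  define I where "I = {-int a..int b}"
  have r1: "1 < r" using r_facts[OF p rdef] by simp
  define RA where "RA = r^(a+1)"
  define RB where "RB = r^(b+1)"
  have RA: "r \<le> RA" and RB: "r \<le> RB"
    using r1 by (auto simp: RA_def RB_def intro!: order.trans[of _ "r^1"] power_increasing)
  define G0 where "G0 = 2 / ((r-1) * (1/(RA-1) + 1/(RB-1)))"
  have G0pos: "0 < G0" using r1 RA RB by (auto simp: G0_def intro!: divide_pos_pos mult_pos_pos add_pos_pos)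
  define g where "g x = G0 * (if x \<le> 0 then phi r RA (nat (-x)) else phi r RB (nat x))" for x
  have phi0: "phi r R 0 = 1" if "R \<noteq> 1" for R using that by (simp add: phi_def)
  have gnn: "0 \<le> g x" if "x \<in> I" for x
  proof -
    have "r ^ nat (-x) \<le> RA" if "x \<le> 0" using that \<open>x \<in> I\<close> r1 unfolding RA_def I_def
      by (intro power_increasing) auto
    moreover have "r ^ nat x \<le> RB" if "\<not> x \<le> 0" using that \<open>x \<in> I\<close> r1 unfolding RB_def I_def
      by (intro power_increasing) auto
    ultimately show ?thesis using G0pos RA RB r1 by (auto simp: g_def phi_def)
  qed
  have gb1: "g (int b + 1) = 0" by (simp add: g_def phi_def RB_def nat_add_distrib)
  have gb2: "g (- int a - 1) = 0"
  proof -
    have "nat (- (- int a - 1)) = a + 1" by simp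
    then show ?thesis by (simp add: g_def phi_def RA_def)
  qed
  have QIg: "QI p I g x = pl p x * g (x+1) + (1 - pl p x) * g (x-1)" if "x \<in> I" for x
  proof -
    have "x + 1 \<notin> I \<Longrightarrow> x = int b" "x - 1 \<notin> I \<Longrightarrow> x = - int a" using that by (auto simp: I_def)
    then show ?thesis using gb1 gb2 by (auto simp: QI_def)
  qed
  have gsup: "(if x = 0 then 1 else 0) \<le> g x - QI p I g x" if "x \<in> I" for x
  proof -
    consider "x = 0" | "x > 0" | "x < 0" by linarith
    then show ?thesis
    proof cases
      case 1
      have "g 0 - QI p I g 0 = G0 * (1 - (phi r RB 1 + phi r RA 1)/2)"
        using QIg[OF that] 1 RA RB r1 by (simp add: g_def pl_def phi0 algebra_simps)
      also have "\<dots> = G0 * ((1 - phi r RB 1) + (1 - phi r RA 1))/2"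
        by (simp add: field_simps)
      also have "\<dots> = G0 * ((r-1)/(RB-1) + (r-1)/(RA-1))/2"
      proof -
        have "1 - phi r R 1 = (r-1)/(R-1)" if "R \<noteq> 1" for R
          using that by (simp add: phi_def field_simps)
        then show ?thesis using RA RB r1 by simp
      qed
      also have "\<dots> = 1"
      proof -
        define D where "D = (r-1) * (1/(RA-1) + 1/(RB-1))"
        have "0 < D" using RA RB r1 unfolding D_def by (intro mult_pos_pos add_pos_pos) auto
        moreover have "(r-1)/(RB-1) + (r-1)/(RA-1) = D" unfolding D_def by (simp add: divide_inverse algebra_simps)
        moreover have "G0 = 2 / D" by (simp add: G0_def D_def)
        ultimately show ?thesis by simp
      qed
      finally show ?thesis using 1 by simp
    next
      case 2
      define k where "k = nat x"
      have k1: "1 \<le> k" and xk: "x = int k" using 2 by (auto simp: k_def)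
      have "g (x+1) = G0 * phi r RB (k+1)" using 2 by (simp add: g_def xk nat_add_distrib)
      moreover have "g (x-1) = G0 * phi r RB (k-1)"
      proof (cases "k = 1")
        case True then show ?thesis using RA RB r1 by (simp add: g_def xk phi0)
      next
        case False then show ?thesis using k1 by (simp add: g_def xk nat_diff_distrib)
      qed
      moreover have "pl p x = 1 - p" using 2 by (simp add: pl_def)
      then have "QI p I g x = (1-p) * g (x+1) + p * g (x-1)" using QIg[OF that] by simp
      ultimately have "QI p I g x = G0 * ((1-p) * phi r RB (k+1) + p * phi r RB (k-1))"
        by (simp add: algebra_simps)
      also have "\<dots> = g x" using phi_step[OF p rdef k1] 2 by (simp add: g_def xk)
      finally show ?thesis using 2 by simp
    next
      case 3
      define k where "k = nat (-x)"
      have k1: "1 \<le> k" and xk: "x = - int k" using 3 by (auto simp: k_def)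
      have "g (x-1) = G0 * phi r RA (k+1)" using 3 by (simp add: g_def xk nat_add_distrib)
      moreover have "g (x+1) = G0 * phi r RA (k-1)"
        using k1 by (simp add: g_def xk nat_diff_distrib)
      moreover have "pl p x = p" using 3 by (simp add: pl_def)
      ultimately have "QI p I g x = G0 * ((1-p) * phi r RA (k+1) + p * phi r RA (k-1))"
        using QIg[OF that] by (simp add: algebra_simps)
      also have "\<dots> = g x" using phi_step[OF p rdef k1] 3 by (simp add: g_def xk)
      finally show ?thesis using 3 by simp
    qed
  qed
  have p01: "0 \<le> p" "p \<le> 1" using p by auto
  have "(\<Sum>k<N. Epath p k 0 (\<lambda>l. if set l \<subseteq> I \<and> last l = 0 then 1 else 0))
      \<le> (\<Sum>k<N. Epath p k 0 (\<lambda>l. if set l \<subseteq> I then g (last l) - QI p I g (last l) else 0))"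
  proof (intro sum_mono Ex_mono[OF p01])
    fix k l assume "nnp l" "hd l = 0" "length l = Suc k"
    then have "l \<noteq> []" by auto
    then have "set l \<subseteq> I \<Longrightarrow> last l \<in> I" by auto
    then show "(if set l \<subseteq> I \<and> last l = 0 then 1 else 0) \<le> (if set l \<subseteq> I then g (last l) - QI p I g (last l) else 0)"
      using gsup[of "last l"] gsup[of 0] by (auto split: if_splits)
  qed
  also have "\<dots> = g 0 - Epath p N 0 (\<lambda>l. if set l \<subseteq> I then g (last l) else 0)"
    by (rule Ex_tel) (simp add: I_def)
  also have "\<dots> \<le> g 0"
  proof -
    have "0 \<le> Epath p N 0 (\<lambda>l. if set l \<subseteq> I then g (last l) else 0)"
    proof (rule Ex_nonneg[OF p01])
      fix l assume "nnp l" "hd l = 0" "length l = Suc N"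
      then have "l \<noteq> []" by auto
      then have "last l \<in> set l" by simp
      then show "0 \<le> (if set l \<subseteq> I then g (last l) else 0)" using gnn by auto
    qed
    then show ?thesis by simp
  qed
  also have "g 0 = G0" using RA r1 by (simp add: g_def phi0)
  also have "G0 \<le> 2 * r / (r - 1) * min (r^a) (r^b)"
  proof -
    have ra: "0 < RA - 1" "0 < RB - 1" "0 < r - 1" using RA RB r1 by auto
    have ra2: "0 < 1/(RA-1)" "0 < 1/(RB-1)" using ra by auto
    have "G0 \<le> 2 / ((r-1) * (1/(RA-1)))" unfolding G0_def
      using ra ra2 by (intro divide_left_mono mult_left_mono mult_pos_pos add_pos_pos) auto
    also have "\<dots> = 2 * (RA - 1) / (r - 1)" using ra by simp
    finally have A: "G0 \<le> 2 * (RA - 1) / (r - 1)" .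
    have "G0 \<le> 2 / ((r-1) * (1/(RB-1)))" unfolding G0_def
      using ra ra2 by (intro divide_left_mono mult_left_mono mult_pos_pos add_pos_pos) auto
    also have "\<dots> = 2 * (RB - 1) / (r - 1)" using ra by simp
    finally have B: "G0 \<le> 2 * (RB - 1) / (r - 1)" .
    have "2 * (RA - 1) / (r - 1) \<le> 2 * r / (r - 1) * r^a" using r1 by (simp add: RA_def field_simps)
    moreover have "2 * (RB - 1) / (r - 1) \<le> 2 * r / (r - 1) * r^b" using r1 by (simp add: RB_def field_simps)
    ultimately show ?thesis using A B by (auto simp: min_def)
  qed
  finally show ?thesis by (simp add: I_def)
qed



lemma Ex_decr':
  assumes "0 \<le> p" "p \<le> 1" "k \<le> N"
  shows "Epath p N x (\<lambda>l. if set l \<subseteq> I then 1 else 0) \<le> Epath p k x (\<lambda>l. if set l \<subseteq> I then 1 else 0)"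
  using assms(3)
proof (induction N rule: dec_induct)
  case base
  then show ?case by simp
next
  case (step n)
  then show ?case using Ex_decr[OF assms(1,2), of n x I] by linarith
qed

lemma RecB:
  assumes p: "1/2 < p" "p < 1" and rdef: "r = p/(1-p)" and s1: "1 \<le> s"
  shows "\<exists>N0. \<forall>N\<ge>N0. r^s / 2 \<le> (\<Sum>k<N. Epath p k 0 (\<lambda>l. if set l \<subseteq> {-int s..int s} \<and> last l = 0 then 1 else 0))"
proof -
  define I where "I = {-int s..int s}"
  have r1: "1 < r" using r_facts[OF p rdef] by simp
  have p01: "0 \<le> p" "p \<le> 1" using p by auto
  define R where "R = r^(s+1)"
  have Rr: "r \<le> R" using r1 s1 by (auto simp: R_def intro!: order.trans[of _ "r^1"] power_increasing)
  define c where "c = (R-1)/(r-1)"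
  define g where "g x = c * phi r R (nat \<bar>x\<bar>)" for x
  have gform: "g x = (R - r ^ nat \<bar>x\<bar>) / (r - 1)" for x
    using Rr r1 by (simp add: g_def c_def phi_def)
  define gmax where "gmax = R / (r-1)"
  have gnn: "0 \<le> g x" and gle: "g x \<le> gmax" if "x \<in> I" for x
  proof -
    have "r ^ nat \<bar>x\<bar> \<le> R" unfolding R_def using that r1 by (intro power_increasing) (auto simp: I_def)
    then show "0 \<le> g x" using r1 by (simp add: gform)
    show "g x \<le> gmax" using r1 by (simp add: gform gmax_def divide_right_mono)
  qed
  have gs: "g (int s + 1) = 0" "g (- int s - 1) = 0"
    by (simp_all add: gform R_def nat_add_distrib)
  have QIg: "QI p I g x = pl p x * g (x+1) + (1 - pl p x) * g (x-1)" if "x \<in> I" for x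
  proof -
    have "x + 1 \<notin> I \<Longrightarrow> x = int s" "x - 1 \<notin> I \<Longrightarrow> x = - int s" using that by (auto simp: I_def)
    then show ?thesis using gs by (auto simp: QI_def)
  qed
  have phi0: "phi r R 0 = 1" using Rr r1 by (simp add: phi_def)
  have gsub: "g x - QI p I g x \<le> (if x = 0 then 1 else 0)" if "x \<in> I" for x
  proof -
    consider "x = 0" | "x > 0" | "x < 0" by linarith
    then show ?thesis
    proof cases
      case 1
      have g1: "g 1 = (R - r) / (r - 1)" "g (-1) = (R - r) / (r - 1)" by (simp_all add: gform)
      have e: "QI p I g 0 = 1/2 * g 1 + 1/2 * g (-1)" using QIg[OF that] 1 by (simp add: pl_def)
      have "QI p I g 0 = (R - r) / (r - 1)" unfolding e g1 by linarith
      moreover have "g 0 = (R - 1) / (r - 1)" by (simp add: gform)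
      ultimately have "g 0 - QI p I g 0 = (R-1)/(r-1) - (R-r)/(r-1)" by (simp only:)
      also have "\<dots> = ((R-1) - (R-r))/(r-1)" by (rule diff_divide_distrib[symmetric])
      also have "\<dots> = 1" using r1 by simp
      finally have "g 0 - QI p I g 0 = 1" .
      then show ?thesis using 1 by simp
    next
      case 2
      define k where "k = nat x"
      have k1: "1 \<le> k" and xk: "x = int k" using 2 by (auto simp: k_def)
      have "pl p x = 1 - p" using 2 by (simp add: pl_def)
      then have "QI p I g x = (1-p) * g (x+1) + p * g (x-1)" using QIg[OF that] by simp
      also have "\<dots> = c * ((1-p) * phi r R (k+1) + p * phi r R (k-1))"
      proof -
        have "nat \<bar>int k + 1\<bar> = k + 1" "nat \<bar>int k - 1\<bar> = k - 1" "nat (int k - 1) = k - 1" using k1 by auto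
        then have "g (x+1) = c * phi r R (k+1)" "g (x-1) = c * phi r R (k-1)" by (simp_all add: g_def xk)
        then show ?thesis by (simp add: algebra_simps)
      qed
      also have "\<dots> = g x" using phi_step[OF p rdef k1] by (simp add: g_def xk)
      finally show ?thesis using 2 by simp
    next
      case 3
      define k where "k = nat (-x)"
      have k1: "1 \<le> k" and xk: "x = - int k" using 3 by (auto simp: k_def)
      have "pl p x = p" using 3 by (simp add: pl_def)
      then have "QI p I g x = p * g (x+1) + (1-p) * g (x-1)" using QIg[OF that] by simp
      also have "\<dots> = c * ((1-p) * phi r R (k+1) + p * phi r R (k-1))"
      proof -
        have "nat \<bar>- int k + 1\<bar> = k - 1" "nat \<bar>- int k - 1\<bar> = k + 1" "nat (int k - 1) = k - 1" using k1 by auto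
        then have "g (x+1) = c * phi r R (k-1)" "g (x-1) = c * phi r R (k+1)" by (simp_all add: g_def xk)
        then show ?thesis by (simp add: algebra_simps)
      qed
      also have "\<dots> = g x" using phi_step[OF p rdef k1] by (simp add: g_def xk)
      finally show ?thesis using 3 by simp
    qed
  qed
  define B where "B = 2 / (r - 1)"
  define A where "A = B * R"
  define h where "h x = A - B * r ^ nat \<bar>x\<bar> + \<bar>x\<bar>" for x
  define eps where "eps = 2*p - 1"
  have eps: "0 < eps" "eps \<le> 1" using p by (auto simp: eps_def)
  have Bpos: "0 < B" using r1 by (simp add: B_def)
  have hnn: "0 \<le> h x" if "\<bar>x\<bar> \<le> int s + 1" for x
  proof -
    have "r ^ nat \<bar>x\<bar> \<le> R" unfolding R_def using that r1 by (intro power_increasing) auto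
    then have "B * r ^ nat \<bar>x\<bar> \<le> A" unfolding A_def using Bpos by simp
    then show ?thesis by (simp add: h_def)
  qed
  have QIh: "QI p I h x \<le> pl p x * h (x+1) + (1 - pl p x) * h (x-1)" if "x \<in> I" for x
  proof -
    have a: "0 \<le> h (x+1)" "0 \<le> h (x-1)" using that by (auto simp: I_def intro!: hnn)
    have b: "0 \<le> pl p x" "0 \<le> 1 - pl p x" using pl_bounds[OF p01] by auto
    show ?thesis unfolding QI_def using a b
      by (intro add_mono mult_left_mono) auto
  qed
  have hsup: "eps \<le> h x - QI p I h x" if "x \<in> I" for x
  proof -
    consider "x = 0" | "x > 0" | "x < 0" by linarith
    then show ?thesis
    proof cases
      case 1
      have "pl p x * h (x+1) + (1 - pl p x) * h (x-1) = A - B * r + 1"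
        using 1 by (simp add: pl_def h_def)
      moreover have "h x = A - B" using 1 by (simp add: h_def)
      moreover have "B * r - B = 2"
      proof -
        have "B * r - B = B * (r - 1)" by (simp add: algebra_simps)
        also have "\<dots> = 2" unfolding B_def using r1 by (simp add: field_simps)
        finally show ?thesis .
      qed
      ultimately show ?thesis using QIh[OF that] eps by linarith
    next
      case 2
      define k where "k = nat x"
      have k1: "1 \<le> k" and xk: "x = int k" using 2 by (auto simp: k_def)
      have "pl p x = 1 - p" using 2 by (simp add: pl_def)
      then have "pl p x * h (x+1) + (1 - pl p x) * h (x-1) = (1-p) * h (x+1) + p * h (x-1)" by simp
      also have "\<dots> = A - B * ((1-p) * r^(k+1) + p * r^(k-1)) + ((1-p) * (k+1) + p * (k-1))"
      proof -
        have e: "nat \<bar>int k + 1\<bar> = k + 1" "nat \<bar>int k - 1\<bar> = k - 1" "\<bar>int k + 1\<bar> = int k + 1" "\<bar>int k - 1\<bar> = int k - 1"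
          "nat (int k + 1) = k + 1" "nat (int k - 1) = k - 1"
          using k1 by auto
        have hx: "h (x+1) = A - B * r^(k+1) + (k+1)" "h (x-1) = A - B * r^(k-1) + (real k - 1)"
          unfolding h_def xk e using k1 by (simp_all add: of_nat_diff)
        show ?thesis unfolding hx using k1 by (simp add: of_nat_diff algebra_simps)
      qed
      also have "\<dots> = h x - eps"
        using r_key[OF p rdef k1] k1 by (simp add: h_def xk eps_def of_nat_diff algebra_simps)
      finally show ?thesis using QIh[OF that] by linarith
    next
      case 3
      define k where "k = nat (-x)"
      have k1: "1 \<le> k" and xk: "x = - int k" using 3 by (auto simp: k_def)
      have nk: "nat \<bar>- int k + 1\<bar> = k - 1" "nat \<bar>- int k - 1\<bar> = k + 1" "\<bar>- int k + 1\<bar> = int k - 1" "\<bar>- int k - 1\<bar> = int k + 1"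
        "nat (int k + 1) = k + 1" "nat (int k - 1) = k - 1"
        using k1 by auto
      have "pl p x = p" using 3 by (simp add: pl_def)
      then have "pl p x * h (x+1) + (1 - pl p x) * h (x-1) = p * h (x+1) + (1-p) * h (x-1)" by simp
      also have "\<dots> = A - B * ((1-p) * r^(k+1) + p * r^(k-1)) + ((1-p) * (k+1) + p * (k-1))"
      proof -
        have hx: "h (x+1) = A - B * r^(k-1) + (real k - 1)" "h (x-1) = A - B * r^(k+1) + (k+1)"
          unfolding h_def xk nk using k1 by (simp_all add: of_nat_diff)
        show ?thesis unfolding hx using k1 by (simp add: of_nat_diff algebra_simps)
      qed
      also have "\<dots> = h x - eps"
        using r_key[OF p rdef k1] k1 by (simp add: h_def xk eps_def of_nat_diff algebra_simps)
      finally show ?thesis using QIh[OF that] by linarith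
    qed
  qed
  let ?E = "\<lambda>k. Epath p k 0 (\<lambda>l. if set l \<subseteq> I then 1 else 0)"
  have Ebound: "real N * eps * ?E N \<le> h 0" for N
  proof -
    have "real N * eps * ?E N = (\<Sum>k<N. eps * ?E N)" by simp
    also have "\<dots> \<le> (\<Sum>k<N. eps * ?E k)"
      using eps by (intro sum_mono mult_left_mono Ex_decr'[OF p01]) auto
    also have "\<dots> = (\<Sum>k<N. Epath p k 0 (\<lambda>l. if set l \<subseteq> I then eps else 0))"
    proof (intro sum.cong refl)
      fix k
      have "eps * ?E k = Epath p k 0 (\<lambda>l. eps * (if set l \<subseteq> I then 1 else 0))" by (simp only: Ex_cmult)
      also have "\<dots> = Epath p k 0 (\<lambda>l. if set l \<subseteq> I then eps else 0)"
        by (intro Ex_cong) auto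
      finally show "eps * ?E k = Epath p k 0 (\<lambda>l. if set l \<subseteq> I then eps else 0)" .
    qed
    also have "\<dots> \<le> (\<Sum>k<N. Epath p k 0 (\<lambda>l. if set l \<subseteq> I then h (last l) - QI p I h (last l) else 0))"
    proof (intro sum_mono Ex_mono[OF p01])
      fix k l assume "nnp l" "hd l = 0" "length l = Suc k"
      then have "l \<noteq> []" by auto
      then have "set l \<subseteq> I \<Longrightarrow> last l \<in> I" by auto
      then show "(if set l \<subseteq> I then eps else 0) \<le> (if set l \<subseteq> I then h (last l) - QI p I h (last l) else 0)"
        using hsup by auto
    qed
    also have "\<dots> = h 0 - Epath p N 0 (\<lambda>l. if set l \<subseteq> I then h (last l) else 0)"
      by (rule Ex_tel) (simp add: I_def)
    also have "\<dots> \<le> h 0"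
    proof -
      have "0 \<le> Epath p N 0 (\<lambda>l. if set l \<subseteq> I then h (last l) else 0)"
      proof (rule Ex_nonneg[OF p01])
        fix l assume "nnp l" "hd l = 0" "length l = Suc N"
        then have "l \<noteq> []" by auto
        then have "last l \<in> set l" by simp
        moreover have "x \<in> I \<Longrightarrow> \<bar>x\<bar> \<le> int s + 1" for x by (auto simp: I_def)
        ultimately show "0 \<le> (if set l \<subseteq> I then h (last l) else 0)"
          by (auto intro!: hnn)
      qed
      then show ?thesis by simp
    qed
    finally show ?thesis .
  qed
  have Glow: "g 0 - gmax * ?E N \<le> (\<Sum>k<N. Epath p k 0 (\<lambda>l. if set l \<subseteq> I \<and> last l = 0 then 1 else 0))" for N
  proof -
    have "g 0 - gmax * ?E N \<le> g 0 - Epath p N 0 (\<lambda>l. if set l \<subseteq> I then g (last l) else 0)"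
    proof -
      have "Epath p N 0 (\<lambda>l. if set l \<subseteq> I then g (last l) else 0) \<le> Epath p N 0 (\<lambda>l. gmax * (if set l \<subseteq> I then 1 else 0))"
      proof (rule Ex_mono[OF p01])
        fix l assume "nnp l" "hd l = 0" "length l = Suc N"
        then have "l \<noteq> []" by auto
        then have "last l \<in> set l" by simp
        then show "(if set l \<subseteq> I then g (last l) else 0) \<le> gmax * (if set l \<subseteq> I then 1 else 0)"
          using gle by auto
      qed
      then show ?thesis by (simp add: Ex_cmult)
    qed
    also have "\<dots> = (\<Sum>k<N. Epath p k 0 (\<lambda>l. if set l \<subseteq> I then g (last l) - QI p I g (last l) else 0))"
      by (rule Ex_tel[symmetric]) (simp add: I_def)
    also have "\<dots> \<le> (\<Sum>k<N. Epath p k 0 (\<lambda>l. if set l \<subseteq> I \<and> last l = 0 then 1 else 0))"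
    proof (intro sum_mono Ex_mono[OF p01])
      fix k l assume "nnp l" "hd l = 0" "length l = Suc k"
      then have "l \<noteq> []" by auto
      then have "set l \<subseteq> I \<Longrightarrow> last l \<in> I" by auto
      then show "(if set l \<subseteq> I then g (last l) - QI p I g (last l) else 0) \<le> (if set l \<subseteq> I \<and> last l = 0 then 1 else 0)"
        using gsub[of "last l"] by (cases "set l \<subseteq> I"; cases "last l = 0") auto
    qed
    finally show ?thesis .
  qed
  have g0: "r^s \<le> g 0"
  proof -
    have "r^s * (r - 1) \<le> R - 1" using r1 by (simp add: R_def algebra_simps)
    then show ?thesis using r1 by (simp add: gform pos_le_divide_eq)
  qed
  have gmaxpos: "0 < gmax" using r1 Rr by (simp add: gmax_def)
  have h0: "0 \<le> h 0" by (rule hnn) simp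
  have rs: "0 < r^s" using r1 by simp
  define N0 where "N0 = nat \<lceil>2 * gmax * h 0 / (eps * r^s)\<rceil> + 1"
  show ?thesis
  proof (intro exI allI impI)
    fix N assume N: "N0 \<le> N"
    have Npos: "0 < real N" using N by (simp add: N0_def)
    have "2 * gmax * h 0 / (eps * r^s) \<le> real N" using N unfolding N0_def by linarith
    then have "2 * gmax * h 0 \<le> real N * (eps * r^s)" using eps rs by (simp add: pos_divide_le_eq)
    moreover have "gmax * (real N * eps * ?E N) \<le> gmax * h 0"
      using Ebound[of N] gmaxpos by (intro mult_left_mono) auto
    ultimately have "gmax * ?E N * (real N * eps) * 2 \<le> real N * eps * r^s" by (simp add: algebra_simps)
    then have "gmax * ?E N * 2 \<le> r^s" using Npos eps by (simp add: mult.commute[of _ "real N * eps"])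
    then have "r^s / 2 \<le> g 0 - gmax * ?E N" using g0 by linarith
    then show "r^s / 2 \<le> (\<Sum>k<N. Epath p k 0 (\<lambda>l. if set l \<subseteq> {-int s..int s} \<and> last l = 0 then 1 else 0))"
      using Glow[of N] by (simp add: I_def)
  qed
qed



definition Tset :: "int list \<Rightarrow> int set" where
  "Tset l = (if length l = 1 then {} else set l)"

definition uu :: "real \<Rightarrow> real \<Rightarrow> nat \<Rightarrow> real" where
  "uu p q0 n = Epath p n 0 (\<lambda>l. if last l = 0 then q0 ^ card (Tset l) else 0)"

lemma nnp_dist: "nnp l \<Longrightarrow> z \<in> set l \<Longrightarrow> \<bar>z - hd l\<bar> \<le> int (length l - 1)"
proof (induction l arbitrary: z rule: nnp.induct)
  case (3 x y r)
  show ?case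
  proof (cases "z = x")
    case False
    then have "z \<in> set (y#r)" using 3 by auto
    moreover have "nnp (y#r)" using 3 by simp
    ultimately have "\<bar>z - hd (y#r)\<bar> \<le> int (length (y#r) - 1)" using 3 by blast
    then have "\<bar>z - y\<bar> \<le> int (length (y#r) - 1)" by simp
    moreover have "\<bar>x - y\<bar> = 1" using 3 by simp
    ultimately show ?thesis by simp
  qed simp
qed auto

lemma fill_arith:
  fixes x y z m M :: int
  assumes "z \<noteq> x" "\<bar>x - y\<bar> = 1" "m \<le> y" "y \<le> M" "min x m \<le> z" "z \<le> max x M"
  shows "m \<le> z \<and> z \<le> M"
  using assms by (auto simp: abs_if min_def max_def split: if_splits)

lemma nnp_fill: "nnp l \<Longrightarrow> {Min (set l)..Max (set l)} \<subseteq> set l"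
proof (induction l rule: nnp.induct)
  case (3 x y r)
  let ?S = "set (y#r)"
  have IH: "{Min ?S..Max ?S} \<subseteq> ?S" using 3 by auto
  have fin: "finite ?S" "?S \<noteq> {}" by auto
  have y: "Min ?S \<le> y" "y \<le> Max ?S" using fin by auto
  have xy: "\<bar>x - y\<bar> = 1" using 3 by simp
  have eqs: "set (x#y#r) = insert x ?S" by simp
  show ?case
  proof
    fix z assume z: "z \<in> {Min (set (x#y#r))..Max (set (x#y#r))}"
    have m1: "Min (set (x#y#r)) = min x (Min ?S)" "Max (set (x#y#r)) = max x (Max ?S)"
      unfolding eqs using fin by (auto simp: Min_insert Max_insert)
    show "z \<in> set (x#y#r)"
    proof (cases "z = x")
      case False
      have "min x (Min ?S) \<le> z" "z \<le> max x (Max ?S)" using z unfolding m1 by auto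
      then have "z \<in> {Min ?S..Max ?S}" using fill_arith[OF False xy y] by auto
      then show ?thesis using IH by auto
    qed simp
  qed
qed auto

lemma card_interval_le:
  assumes "set l \<subseteq> {-int s..int s}"
  shows "card (set l) \<le> 2 * s+1"
proof -
  have "card (set l) \<le> card {-int s..int s}" using assms by (intro card_mono) auto
  also have "\<dots> = 2 * s+1" by simp
  finally show ?thesis .
qed

lemma AL:
  fixes q :: real
  assumes "0 \<le> q" "q \<le> 1"
  shows "(\<Sum>s\<in>{1..S}. (1-q^2) * q^(2 * s+1) * (if K \<le> 2 * s+1 then 1 else 0)) \<le> (if K \<le> 2 * S+1 then q^K - q^(2 * S+3) else 0)"
proof (induction S)
  case 0
  then show ?case using assms by (auto intro!: power_decreasing)
next
  case (Suc S)
  have q2: "0 \<le> 1 - q^2" using assms by (simp add: power_le_one)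
  have "(\<Sum>s\<in>{1..Suc S}. (1-q^2) * q^(2 * s+1) * (if K \<le> 2 * s+1 then 1 else 0))
      = (\<Sum>s\<in>{1..S}. (1-q^2) * q^(2 * s+1) * (if K \<le> 2 * s+1 then 1 else 0)) + (1-q^2) * q^(2 * S+3) * (if K \<le> 2 * S+3 then 1 else 0)"
  proof -
    have sp: "(\<Sum>s\<in>{1..Suc S}. f s) = (\<Sum>s\<in>{1..S}. f s) + f (Suc S)" for f :: "nat \<Rightarrow> real"
      by (simp add: sum.cl_ivl_Suc)
    have e: "2 * Suc S+1 = 2 * S+3" by simp
    show ?thesis by (simp only: sp e)
  qed
  also have "\<dots> \<le> (if K \<le> 2 * S+1 then q^K - q^(2 * S+3) else 0) + (1-q^2) * q^(2 * S+3) * (if K \<le> 2 * S+3 then 1 else 0)"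
    using Suc by simp
  also have "\<dots> \<le> (if K \<le> 2 * Suc S+1 then q^K - q^(2 * Suc S+3) else 0)"
  proof -
    have "q^(2 * S+5) = q^(2 + (2 * S+3))" by (simp add: add.commute)
    also have "\<dots> = q^2 * q^(2 * S+3)" by (rule power_add)
    finally have e: "(1-q^2) * q^(2 * S+3) = q^(2 * S+3) - q^(2 * S+5)" by (simp add: algebra_simps)
    have "q^(2 * S+3) \<le> q^K" if "K \<le> 2 * S+3" using that assms by (intro power_decreasing) auto
    then show ?thesis using e by (auto simp: algebra_simps)
  qed
  finally show ?case .
qed

lemma AL':
  fixes q :: real
  assumes "0 \<le> q" "q \<le> 1"
  shows "(\<Sum>s\<in>{1..S}. (1-q^2) * q^(2 * s+1) * (if K \<le> 2 * s+1 then 1 else 0)) \<le> q^K"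
proof -
  have "0 \<le> q^(2 * S+3)" using assms by simp
  moreover have "0 \<le> q^K" using assms by simp
  ultimately show ?thesis using AL[OF assms, where S=S and K=K] by (auto split: if_splits)
qed



lemma min_le_sqrt: fixes x y :: real assumes "0 \<le> x" "0 \<le> y" shows "min x y \<le> sqrt (x*y)"
proof -
  have "(min x y)^2 \<le> x*y" using assms by (auto simp: min_def power2_eq_square intro: mult_mono)
  then show ?thesis using assms by (metis min_def real_le_rsqrt)
qed

lemma PW1:
  fixes q0 :: real
  assumes q: "0 \<le> q0" "q0 \<le> 1" and l: "nnp l" "hd l = 0" "length l = Suc n" and n: "1 \<le> n" "n < N"
  shows "(if last l = 0 then q0 ^ card (Tset l) else 0)
    \<le> (\<Sum>a<N. \<Sum>b<N. q0^(a+b+1) * (if set l \<subseteq> {-int a..int b} \<and> last l = 0 then 1 else 0))"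
proof (cases "last l = 0")
  case False
  then show ?thesis using q by (simp add: sum_nonneg)
next
  case True
  have ne: "l \<noteq> []" using l by auto
  have T: "Tset l = set l" using l n by (simp add: Tset_def)
  define mn where "mn = Min (set l)"
  define mx where "mx = Max (set l)"
  have fin: "finite (set l)" "set l \<noteq> {}" using ne by auto
  have z0: "0 \<in> set l" using l ne by (cases l) auto
  have mnx: "mn \<le> 0" "0 \<le> mx" using z0 fin by (auto simp: mn_def mx_def)
  have dist: "\<bar>z\<bar> \<le> int n" if "z \<in> set l" for z using nnp_dist[OF l(1) that] l by simp
  have "mn \<in> set l" "mx \<in> set l" using fin by (auto simp: mn_def mx_def)
  then have bnd: "-mn \<le> int n" "mx \<le> int n" using dist by fastforce+
  define a where "a = nat (-mn)"
  define b where "b = nat mx"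
  have ab: "a < N" "b < N" using bnd n mnx by (auto simp: a_def b_def)
  have ab': "-int a = mn" "int b = mx" using mnx by (auto simp: a_def b_def)
  have sub: "set l \<subseteq> {-int a..int b}" unfolding ab' using fin by (auto simp: mn_def mx_def)
  have "{mn..mx} \<subseteq> set l" using nnp_fill[OF l(1)] by (simp add: mn_def mx_def)
  then have "card {mn..mx} \<le> card (set l)" by (intro card_mono) auto
  moreover have "card {mn..mx} = a + b + 1" using mnx by (simp add: a_def b_def)
  ultimately have "q0 ^ card (Tset l) \<le> q0^(a+b+1)" unfolding T using q by (intro power_decreasing) auto
  also have "\<dots> = q0^(a+b+1) * (if set l \<subseteq> {-int a..int b} \<and> last l = 0 then 1 else 0)"
    using sub True by simp
  also have "\<dots> \<le> (\<Sum>b'<N. q0^(a+b'+1) * (if set l \<subseteq> {-int a..int b'} \<and> last l = 0 then 1 else 0))"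
    by (rule member_le_sum[where f="\<lambda>b'. q0^(a+b'+1) * (if set l \<subseteq> {-int a..int b'} \<and> last l = 0 then 1 else 0)"])
       (use ab q in auto)
  also have "\<dots> \<le> (\<Sum>a<N. \<Sum>b<N. q0^(a+b+1) * (if set l \<subseteq> {-int a..int b} \<and> last l = 0 then 1 else 0))"
    by (rule member_le_sum[where f="\<lambda>a. \<Sum>b<N. q0^(a+b+1) * (if set l \<subseteq> {-int a..int b} \<and> last l = 0 then 1 else 0)"])
       (use ab q in \<open>auto intro!: sum_nonneg\<close>)
  finally show ?thesis using True by simp
qed

lemma TS:
  assumes p: "1/2 < p" "p < 1" and rdef: "r = p/(1-p)" and q: "0 \<le> q0" "q0 \<le> 1" "q0 * sqrt r < 1"
  shows "\<exists>C. \<forall>N. (\<Sum>n<N. uu p q0 n) \<le> C"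
proof -
  have r1: "1 < r" using r_facts[OF p rdef] by simp
  have p01: "0 \<le> p" "p \<le> 1" using p by auto
  define K where "K = 2 * r / (r - 1)"
  define x where "x = q0 * sqrt r"
  have x: "0 \<le> x" "x < 1" using q r1 by (auto simp: x_def)
  let ?G = "\<lambda>n a b. Epath p n 0 (\<lambda>l. if set l \<subseteq> {-int a..int b} \<and> last l = 0 then 1 else 0)"
  have Gnn: "0 \<le> ?G n a b" for n a b by (rule Ex_nonneg[OF p01]) auto
  have geo: "(\<Sum>a<N. x^a) \<le> 1/(1-x)" for N
  proof -
    have "(\<Sum>a<N. x^a) = (1 - x^N)/(1-x)" using x by (simp add: sum_gp_strict)
    also have "\<dots> \<le> 1/(1-x)" using x by (intro divide_right_mono) auto
    finally show ?thesis .
  qed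
  show ?thesis
  proof (intro exI allI)
    fix N
    have un: "uu p q0 n \<le> (if n = 0 then 1 else 0) + (\<Sum>a<N. \<Sum>b<N. q0^(a+b+1) * ?G n a b)" if "n < N" for n
    proof (cases "n = 0")
      case True
      have "0 \<le> (\<Sum>a<N. \<Sum>b<N. q0^(a+b+1) * ?G n a b)" using q Gnn by (intro sum_nonneg mult_nonneg_nonneg) auto
      then show ?thesis using True by (simp add: uu_def Tset_def)
    next
      case False
      have "uu p q0 n \<le> Epath p n 0 (\<lambda>l. \<Sum>a<N. \<Sum>b<N. q0^(a+b+1) * (if set l \<subseteq> {-int a..int b} \<and> last l = 0 then 1 else 0))"
        unfolding uu_def using PW1[OF q(1,2)] False that by (intro Ex_mono[OF p01]) auto
      also have "\<dots> = (\<Sum>a<N. \<Sum>b<N. q0^(a+b+1) * ?G n a b)"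
        by (simp add: Ex_sum Ex_cmult)
      finally show ?thesis using False by simp
    qed
    have "(\<Sum>n<N. uu p q0 n) \<le> (\<Sum>n<N. (if n = 0 then 1 else 0) + (\<Sum>a<N. \<Sum>b<N. q0^(a+b+1) * ?G n a b))"
      using un by (intro sum_mono) auto
    also have "\<dots> \<le> 1 + (\<Sum>a<N. \<Sum>b<N. q0^(a+b+1) * (\<Sum>n<N. ?G n a b))"
    proof -
      have "(\<Sum>n<N. (if n = 0 then 1 else 0::real)) \<le> 1"
        by (simp add: sum.delta)
      moreover have "(\<Sum>n<N. (\<Sum>a<N. \<Sum>b<N. q0^(a+b+1) * ?G n a b)) = (\<Sum>a<N. \<Sum>b<N. q0^(a+b+1) * (\<Sum>n<N. ?G n a b))"
      proof -
        have "(\<Sum>n<N. (\<Sum>a<N. \<Sum>b<N. q0^(a+b+1) * ?G n a b)) = (\<Sum>a<N. \<Sum>n<N. \<Sum>b<N. q0^(a+b+1) * ?G n a b)"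
          by (rule sum.swap)
        also have "\<dots> = (\<Sum>a<N. \<Sum>b<N. \<Sum>n<N. q0^(a+b+1) * ?G n a b)"
          by (intro sum.cong refl sum.swap)
        also have "\<dots> = (\<Sum>a<N. \<Sum>b<N. q0^(a+b+1) * (\<Sum>n<N. ?G n a b))"
          by (intro sum.cong refl) (simp only: sum_distrib_left)
        finally show ?thesis .
      qed
      ultimately show ?thesis by (simp add: sum.distrib)
    qed
    also have "\<dots> \<le> 1 + (\<Sum>a<N. \<Sum>b<N. q0^(a+b+1) * (K * (x/q0)^a * (x/q0)^b))"
    proof -
      have "(\<Sum>n<N. ?G n a b) \<le> K * sqrt r ^ a * sqrt r ^ b" for a b
      proof -
        have 1: "(\<Sum>n<N. ?G n a b) \<le> K * min (r^a) (r^b)" using TB[OF p rdef] by (simp add: K_def)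
        have "min (r^a) (r^b) \<le> sqrt (r^a * r^b)" using r1 by (intro min_le_sqrt) auto
        also have "\<dots> = sqrt r ^ a * sqrt r ^ b" by (simp add: real_sqrt_mult real_sqrt_power)
        finally have 2: "min (r^a) (r^b) \<le> sqrt r ^ a * sqrt r ^ b" .
        have "0 \<le> K" using r1 by (simp add: K_def)
        then have "K * min (r^a) (r^b) \<le> K * (sqrt r ^ a * sqrt r ^ b)" using 2 by (simp add: mult_left_mono)
        then show ?thesis using 1 by (simp add: mult.assoc)
      qed
      moreover have "sqrt r = x / q0" if "q0 \<noteq> 0" using that by (simp add: x_def)
      ultimately show ?thesis
        using q
        apply (cases "q0 = 0")
         apply (simp add: sum_nonneg)
        by (intro add_left_mono sum_mono mult_left_mono) (auto simp: mult.assoc)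
    qed
    also have "\<dots> = 1 + K * q0 * (\<Sum>a<N. x^a) * (\<Sum>b<N. x^b)"
    proof -
      have "q0^(a+b+1) * (K * (x/q0)^a * (x/q0)^b) = K * q0 * x^a * x^b" for a b
      proof (cases "q0 = 0")
        case True then show ?thesis by (simp add: x_def)
      next
        case False
        have "(x/q0)^a = x^a / q0^a" "(x/q0)^b = x^b / q0^b" by (simp_all add: power_divide)
        moreover have "q0^(a+b+1) = q0^a * q0^b * q0" by (simp add: power_add)
        ultimately show ?thesis using False by simp
      qed
      then have "(\<Sum>a<N. \<Sum>b<N. q0^(a+b+1) * (K * (x/q0)^a * (x/q0)^b)) = (\<Sum>a<N. \<Sum>b<N. (K * q0) * (x^a * x^b))"
        by (intro sum.cong refl) (simp add: mult.assoc)
      also have "\<dots> = (K * q0) * ((\<Sum>a<N. x^a) * (\<Sum>b<N. x^b))"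
        by (simp add: sum_distrib_left sum_distrib_right mult_ac)
      finally show ?thesis by (simp add: mult.assoc)
    qed
    also have "\<dots> \<le> 1 + K * q0 * (1/(1-x)) * (1/(1-x))"
    proof -
      have "0 \<le> K * q0" using q r1 by (simp add: K_def)
      moreover have "0 \<le> (\<Sum>a<N. x^a)" using x by (simp add: sum_nonneg)
      ultimately show ?thesis using geo[of N] x
        by (intro add_left_mono mult_mono mult_left_mono) auto
    qed
    finally show "(\<Sum>n<N. uu p q0 n) \<le> 1 + K * q0 * (1/(1-x)) * (1/(1-x))" .
  qed
qed



lemma PW2:
  fixes q0 :: real
  assumes q: "0 \<le> q0" "q0 \<le> 1" and l: "nnp l"
  shows "(\<Sum>s\<in>{1..S}. (1-q0^2) * q0^(2 * s+1) * (if set l \<subseteq> {-int s..int s} \<and> last l = 0 then 1 else 0))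
    \<le> (if last l = 0 then q0 ^ card (Tset l) else 0)"
proof (cases "last l = 0")
  case False
  then show ?thesis by simp
next
  case True
  have q2: "0 \<le> 1 - q0^2" using q by (simp add: power_le_one)
  have "(\<Sum>s\<in>{1..S}. (1-q0^2) * q0^(2 * s+1) * (if set l \<subseteq> {-int s..int s} \<and> last l = 0 then 1 else 0))
     \<le> (\<Sum>s\<in>{1..S}. (1-q0^2) * q0^(2 * s+1) * (if card (Tset l) \<le> 2 * s+1 then 1 else 0))"
  proof (intro sum_mono)
    fix s
    have "set l \<subseteq> {-int s..int s} \<Longrightarrow> card (Tset l) \<le> 2 * s+1"
      using card_interval_le[of l s] by (auto simp: Tset_def)
    then show "(1-q0^2) * q0^(2 * s+1) * (if set l \<subseteq> {-int s..int s} \<and> last l = 0 then 1 else 0)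
        \<le> (1-q0^2) * q0^(2 * s+1) * (if card (Tset l) \<le> 2 * s+1 then 1 else 0)"
    proof (cases "set l \<subseteq> {-int s..int s} \<and> last l = 0")
      case True
      then show ?thesis using \<open>set l \<subseteq> {-int s..int s} \<Longrightarrow> card (Tset l) \<le> 2 * s+1\<close> by simp
    next
      case False
      have "0 \<le> (1-q0^2) * q0^(2 * s+1) * (if card (Tset l) \<le> 2 * s+1 then 1 else 0)"
        using q q2 by simp
      moreover have "(1-q0^2) * q0^(2 * s+1) * (if set l \<subseteq> {-int s..int s} \<and> last l = 0 then 1 else 0) = 0"
        using False by (simp only: if_False mult_zero_right)
      ultimately show ?thesis by linarith
    qed
  qed
  also have "\<dots> \<le> q0 ^ card (Tset l)" by (rule AL'[OF q])
  finally have X: "(\<Sum>s\<in>{1..S}. (1-q0^2) * q0^(2 * s+1) * (if set l \<subseteq> {-int s..int s} \<and> last l = 0 then 1 else 0)) \<le> q0 ^ card (Tset l)" .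
  have "(if last l = 0 then q0 ^ card (Tset l) else 0) = q0 ^ card (Tset l)" using True by simp
  then show ?thesis using X by linarith
qed

lemma RS:
  assumes p: "1/2 < p" "p < 1" and rdef: "r = p/(1-p)" and q: "0 < q0" "q0 < 1" "1 \<le> q0^2 * r"
  shows "\<exists>N. K \<le> (\<Sum>n<N. uu p q0 n)"
proof -
  have r1: "1 < r" using r_facts[OF p rdef] by simp
  have p01: "0 \<le> p" "p \<le> 1" using p by auto
  let ?G = "\<lambda>n s. Epath p n 0 (\<lambda>l. if set l \<subseteq> {-int s..int s} \<and> last l = 0 then 1 else 0)"
  define f where "f s = (SOME N0. \<forall>N\<ge>N0. r^s / 2 \<le> (\<Sum>k<N. ?G k s))" for s
  have f: "r^s / 2 \<le> (\<Sum>k<N. ?G k s)" if "1 \<le> s" "f s \<le> N" for s N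
  proof -
    have "\<exists>N0. \<forall>N\<ge>N0. r^s / 2 \<le> (\<Sum>k<N. ?G k s)" by (rule RecB[OF p rdef that(1)])
    then have "\<forall>N\<ge>f s. r^s / 2 \<le> (\<Sum>k<N. ?G k s)" unfolding f_def by (rule someI_ex)
    then show ?thesis using that(2) by blast
  qed
  define c where "c = (1 - q0^2) * q0"
  have "q0^2 = q0 * q0" by (simp add: power2_eq_square)
  also have "\<dots> \<le> q0 * 1" using q by (intro mult_left_mono) auto
  finally have "q0^2 < 1" using q by simp
  then have c: "0 < c" using q by (simp add: c_def)
  define S where "S = nat \<lceil>2 * K / c\<rceil>"
  define N where "N = (\<Sum>s\<in>{1..S}. f s)"
  have q2: "0 \<le> 1 - q0^2" using q by (simp add: power_le_one)
  have "(\<Sum>n<N. uu p q0 n) \<ge> (\<Sum>n<N. \<Sum>s\<in>{1..S}. (1-q0^2) * q0^(2 * s+1) * ?G n s)"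
  proof (intro sum_mono)
    fix n
    have "(\<Sum>s\<in>{1..S}. (1-q0^2) * q0^(2 * s+1) * ?G n s)
       = Epath p n 0 (\<lambda>l. \<Sum>s\<in>{1..S}. (1-q0^2) * q0^(2 * s+1) * (if set l \<subseteq> {-int s..int s} \<and> last l = 0 then 1 else 0))"
      by (simp add: Ex_sum Ex_cmult)
    also have "\<dots> \<le> uu p q0 n"
      unfolding uu_def using PW2 q by (intro Ex_mono[OF p01]) auto
    finally show "(\<Sum>s\<in>{1..S}. (1-q0^2) * q0^(2 * s+1) * ?G n s) \<le> uu p q0 n" .
  qed
  also have "(\<Sum>n<N. \<Sum>s\<in>{1..S}. (1-q0^2) * q0^(2 * s+1) * ?G n s) = (\<Sum>s\<in>{1..S}. (1-q0^2) * q0^(2 * s+1) * (\<Sum>n<N. ?G n s))"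
  proof -
    have "(\<Sum>n<N. \<Sum>s\<in>{1..S}. (1-q0^2) * q0^(2 * s+1) * ?G n s) = (\<Sum>s\<in>{1..S}. \<Sum>n<N. (1-q0^2) * q0^(2 * s+1) * ?G n s)"
      by (rule sum.swap)
    also have "\<dots> = (\<Sum>s\<in>{1..S}. (1-q0^2) * q0^(2 * s+1) * (\<Sum>n<N. ?G n s))"
      by (intro sum.cong refl) (simp only: sum_distrib_left)
    finally show ?thesis .
  qed
  finally have 1: "(\<Sum>s\<in>{1..S}. (1-q0^2) * q0^(2 * s+1) * (\<Sum>n<N. ?G n s)) \<le> (\<Sum>n<N. uu p q0 n)" .
  have "(\<Sum>s\<in>{1..S}. c / 2) \<le> (\<Sum>s\<in>{1..S}. (1-q0^2) * q0^(2 * s+1) * (\<Sum>n<N. ?G n s))"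
  proof (intro sum_mono)
    fix s assume s: "s \<in> {1..S}"
    have "f s \<le> N" unfolding N_def using s by (intro member_le_sum) auto
    then have G: "r^s / 2 \<le> (\<Sum>n<N. ?G n s)" using f s by auto
    have "1 \<le> (q0^2 * r)^s" using q by (simp add: one_le_power)
    then have "c \<le> c * (q0^2 * r)^s" using c by simp
    also have "c * (q0^2 * r)^s = (1-q0^2) * q0^(2 * s+1) * r^s"
    proof -
      have e1: "(q0^2 * r)^s = q0^(2 * s) * r^s" by (simp add: power_mult_distrib power_mult)
      have e2: "q0^(2 * s+1) = q0 * q0^(2 * s)" by simp
      show ?thesis unfolding e1 e2 c_def by (simp only: mult.assoc)
    qed
    finally have "c / 2 \<le> (1-q0^2) * q0^(2 * s+1) * (r^s / 2)" by simp
    also have "\<dots> \<le> (1-q0^2) * q0^(2 * s+1) * (\<Sum>n<N. ?G n s)"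
      using G q q2 by (intro mult_left_mono) auto
    finally show "c / 2 \<le> (1-q0^2) * q0^(2 * s+1) * (\<Sum>n<N. ?G n s)" .
  qed
  moreover have "K \<le> (\<Sum>s\<in>{1..S}. c / 2)"
  proof -
    have "2 * K / c \<le> real S" unfolding S_def by linarith
    then have "2 * K \<le> real S * c" using c by (simp add: pos_divide_le_eq)
    then show ?thesis by simp
  qed
  ultimately show ?thesis using 1 by (intro exI[of _ N]) linarith
qed



definition rstep :: "int set \<times> int \<Rightarrow> bool \<times> bool \<times> bool \<times> bool \<Rightarrow> int set \<times> int" where
  "rstep s e = (case s of (Z, x) \<Rightarrow> case e of (c, d, bu, bv) \<Rightarrow>
     (let y = base_step x c d in ((Z - {x, y}) \<union> (if bu then {x} else {}) \<union> (if bv then {y} else {}), y)))"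

definition Phi :: "real \<Rightarrow> real \<Rightarrow> nat \<Rightarrow> int set \<times> int \<Rightarrow> real" where
  "Phi p q0 n s = (case s of (Z, x) \<Rightarrow> Epath p n x (\<lambda>l. if last l = 0 \<and> Z \<subseteq> Tset l then q0 ^ card (Tset l) else 0))"

lemma base_step_ne: "base_step x c d \<noteq> x"
  by (auto simp: base_step_def)

lemma base_step_cases: "base_step x c d = x + 1 \<or> base_step x c d = x - 1"
  by (auto simp: base_step_def)

definition pq :: "real \<Rightarrow> bool \<Rightarrow> real" where "pq q0 b = (if b then 1 - q0 else q0)"

lemma pointwise_lamp:
  fixes q0 :: real
  assumes l: "nnp l" "hd l = y" "length l = Suc n" and xy: "x \<noteq> y"
  shows "(\<Sum>bu\<in>UNIV. \<Sum>bv\<in>UNIV. pq q0 bu * pq q0 bv *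
      (if last l = 0 \<and> (Z - {x, y}) \<union> (if bu then {x} else {}) \<union> (if bv then {y} else {}) \<subseteq> Tset l
       then q0 ^ card (Tset l) else 0))
    = (if last (x#l) = 0 \<and> Z \<subseteq> Tset (x#l) then q0 ^ card (Tset (x#l)) else 0)"
proof -
  have ne: "l \<noteq> []" using l by auto
  have lastx: "last (x#l) = last l" using ne by simp
  have Tx: "Tset (x#l) = insert x (set l)" using ne by (simp add: Tset_def)
  show ?thesis
  proof (cases n)
    case 0
    then have l1: "l = [y]" using l by (cases l) auto
    have T: "Tset l = {}" using l1 by (simp add: Tset_def)
    have c2: "card {x, y} = 2" using xy by simp
    show ?thesis
      unfolding lastx Tx T using l1 c2
      by (auto simp: UNIV_bool pq_def power2_eq_square insert_commute)
  next
    case (Suc k)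
    have T: "Tset l = set l" using l Suc by (simp add: Tset_def)
    have y: "y \<in> set l" using l ne by (cases l) auto
    show ?thesis
    proof (cases "x \<in> set l")
      case True
      have e: "((Z - {x, y}) \<union> (if bu then {x} else {}) \<union> (if bv then {y} else {}) \<subseteq> set l) = (Z \<subseteq> insert x (set l))" for bu bv
        using True y by auto
      have ix: "insert x (set l) = set l" using True by auto
      show ?thesis unfolding lastx Tx T e ix
        by (simp add: UNIV_bool pq_def algebra_simps)
    next
      case False
      have e: "((Z - {x, y}) \<union> (if bu then {x} else {}) \<union> (if bv then {y} else {}) \<subseteq> set l) = (\<not> bu \<and> Z \<subseteq> insert x (set l))" for bu bv
        using False y by auto
      have cx: "card (insert x (set l)) = Suc (card (set l))" using False by simp
      show ?thesis unfolding lastx Tx T e cx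
        by (simp add: UNIV_bool pq_def algebra_simps)
    qed
  qed
qed

lemma PhiRec:
  fixes p q0 :: real
  assumes p01: "0 \<le> p" "p \<le> 1"
  shows "(\<Sum>c\<in>UNIV. \<Sum>d\<in>UNIV. \<Sum>bu\<in>UNIV. \<Sum>bv\<in>UNIV.
            pmf (bernoulli_pmf p) c * (1/2) * pq q0 bu * pq q0 bv * Phi p q0 n (rstep (Z, x) (c, d, bu, bv)))
         = Phi p q0 (Suc n) (Z, x)"
proof -
  define F where "F l = (if last l = 0 \<and> Z \<subseteq> Tset l then q0 ^ card (Tset l) else 0)" for l
  define H where "H y = Epath p n y (\<lambda>l. F (x#l))" for y
  define Z' where "Z' y bu bv = (Z - {x, y}) \<union> (if bu then {x} else {}) \<union> (if bv then {y} else {})" for y bu bv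
  have Hy: "(\<Sum>bu\<in>UNIV. \<Sum>bv\<in>UNIV. pq q0 bu * pq q0 bv * Phi p q0 n (Z' y bu bv, y)) = H y" if "y \<noteq> x" for y
  proof -
    have "(\<Sum>bu\<in>UNIV. \<Sum>bv\<in>UNIV. pq q0 bu * pq q0 bv * Phi p q0 n (Z' y bu bv, y))
      = Epath p n y (\<lambda>l. \<Sum>bu\<in>UNIV. \<Sum>bv\<in>UNIV. pq q0 bu * pq q0 bv *
          (if last l = 0 \<and> Z' y bu bv \<subseteq> Tset l then q0 ^ card (Tset l) else 0))"
      by (simp add: Ex_sum Ex_cmult Phi_def)
    also have "\<dots> = H y" unfolding H_def F_def Z'_def
      by (rule Ex_cong) (rule pointwise_lamp, use that in auto)
    finally show ?thesis .
  qed
  have rs: "rstep (Z, x) (c, d, bu, bv) = (Z' (base_step x c d) bu bv, base_step x c d)" for c d bu bv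
    by (simp add: rstep_def Z'_def Let_def)
  have "(\<Sum>c\<in>UNIV. \<Sum>d\<in>UNIV. \<Sum>bu\<in>UNIV. \<Sum>bv\<in>UNIV.
            pmf (bernoulli_pmf p) c * (1/2) * pq q0 bu * pq q0 bv * Phi p q0 n (rstep (Z, x) (c, d, bu, bv)))
      = (\<Sum>c\<in>UNIV. \<Sum>d\<in>UNIV. pmf (bernoulli_pmf p) c * (1/2) * H (base_step x c d))"
  proof (intro sum.cong refl)
    fix c d
    have "(\<Sum>bu\<in>UNIV. \<Sum>bv\<in>UNIV. pmf (bernoulli_pmf p) c * (1/2) * pq q0 bu * pq q0 bv * Phi p q0 n (rstep (Z, x) (c, d, bu, bv)))
       = pmf (bernoulli_pmf p) c * (1/2) * (\<Sum>bu\<in>UNIV. \<Sum>bv\<in>UNIV. pq q0 bu * pq q0 bv * Phi p q0 n (Z' (base_step x c d) bu bv, base_step x c d))"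
      by (simp add: rs sum_distrib_left mult.assoc)
    also have "\<dots> = pmf (bernoulli_pmf p) c * (1/2) * H (base_step x c d)"
      using Hy[OF base_step_ne] by simp
    finally show "(\<Sum>bu\<in>UNIV. \<Sum>bv\<in>UNIV. pmf (bernoulli_pmf p) c * (1/2) * pq q0 bu * pq q0 bv * Phi p q0 n (rstep (Z, x) (c, d, bu, bv)))
       = pmf (bernoulli_pmf p) c * (1/2) * H (base_step x c d)" .
  qed
  also have "\<dots> = pl p x * H (x+1) + (1 - pl p x) * H (x-1)"
    using p01 by (auto simp: UNIV_bool base_step_def pl_def field_simps)
  also have "\<dots> = Phi p q0 (Suc n) (Z, x)"
    by (simp add: Phi_def H_def F_def)
  finally show ?thesis .
qed



definition kap :: "('a, 'b) monoid_scheme \<Rightarrow> bool \<times> bool \<times> 'a \<times> 'a \<Rightarrow> bool \<times> bool \<times> bool \<times> bool" where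
  "kap F e = (case e of (c, d, u, v) \<Rightarrow> (c, d, u \<noteq> \<one>\<^bsub>F\<^esub>, v \<noteq> \<one>\<^bsub>F\<^esub>))"

fun rw :: "int set \<times> int \<Rightarrow> (bool \<times> bool \<times> bool \<times> bool) stream \<Rightarrow> nat \<Rightarrow> int set \<times> int" where
  "rw s \<omega> 0 = s"
| "rw s \<omega> (Suc n) = rw (rstep s (shd \<omega>)) (stl \<omega>) n"

lemma rw_last: "rw s \<omega> (Suc n) = rstep (rw s \<omega> n) (\<omega> !! n)"
  by (induction n arbitrary: s \<omega>) auto

lemma rw_add: "rw s \<omega> (n + k) = rw (rw s \<omega> n) (sdrop n \<omega>) k"
  by (induction n arbitrary: s \<omega>) auto

lemma lamp_rw: "lamp_walk F \<omega> n = (L, x) \<Longrightarrow> rw ({}, 0) (smap (kap F) \<omega>) n = ({i. L i \<noteq> \<one>\<^bsub>F\<^esub>}, x)"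
proof (induction n arbitrary: L x)
  case 0
  have "((\<lambda>i. \<one>\<^bsub>F\<^esub>), 0) = (L, x)" using 0 by (simp add: lamp_id_def)
  then have "L = (\<lambda>i. \<one>\<^bsub>F\<^esub>)" "x = 0" by auto
  then show ?case by simp
next
  case (Suc n)
  obtain L0 x0 where w: "lamp_walk F \<omega> n = (L0, x0)" by (cases "lamp_walk F \<omega> n")
  obtain c d u v where e: "\<omega> !! n = (c, d, u, v)" by (cases "\<omega> !! n") auto
  define y where "y = base_step x0 c d"
  have yx: "y \<noteq> x0" unfolding y_def by (rule base_step_ne)
  have "lamp_walk F \<omega> (Suc n) = ((L0(x0 := u))(y := v), y)" using w e by (simp add: y_def Let_def)
  then have LL: "L = (L0(x0 := u))(y := v)" "x = y" using Suc.prems by auto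
  have "rw ({}, 0) (smap (kap F) \<omega>) (Suc n) = rstep ({i. L0 i \<noteq> \<one>\<^bsub>F\<^esub>}, x0) (c, d, u \<noteq> \<one>\<^bsub>F\<^esub>, v \<noteq> \<one>\<^bsub>F\<^esub>)"
    unfolding rw_last Suc.IH[OF w] using e by (simp add: kap_def)
  also have "\<dots> = ({i. L i \<noteq> \<one>\<^bsub>F\<^esub>}, x)"
    unfolding rstep_def LL using yx by (auto simp: y_def[symmetric] Let_def)
  finally show ?case .
qed

lemma lamp_iff: "(lamp_walk F \<omega> n = lamp_id F) = (rw ({}, 0) (smap (kap F) \<omega>) n = ({}, 0))"
proof -
  obtain L x where w: "lamp_walk F \<omega> n = (L, x)" by (cases "lamp_walk F \<omega> n")
  have r: "rw ({}, 0) (smap (kap F) \<omega>) n = ({i. L i \<noteq> \<one>\<^bsub>F\<^esub>}, x)" by (rule lamp_rw[OF w])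
  show ?thesis
  proof
    assume "lamp_walk F \<omega> n = lamp_id F"
    then have "L = (\<lambda>i. \<one>\<^bsub>F\<^esub>)" "x = 0" using w by (auto simp: lamp_id_def)
    then show "rw ({}, 0) (smap (kap F) \<omega>) n = ({}, 0)" using r by simp
  next
    assume "rw ({}, 0) (smap (kap F) \<omega>) n = ({}, 0)"
    then have "{i. L i \<noteq> \<one>\<^bsub>F\<^esub>} = {}" "x = 0" using r by auto
    then have "L = (\<lambda>i. \<one>\<^bsub>F\<^esub>)" "x = 0" by auto
    then show "lamp_walk F \<omega> n = lamp_id F" using w by (simp add: lamp_id_def)
  qed
qed

lemma meas_rw[measurable]: "Measurable.pred (stream_space (count_space UNIV)) (\<lambda>\<omega>. rw s \<omega> n = t)"
proof (induction n arbitrary: s)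
  case 0
  then show ?case by simp
next
  case (Suc n)
  have A: "Measurable.pred (stream_space (count_space UNIV)) (\<lambda>\<omega>. rw (rstep s e) (stl \<omega>) n = t)" for e
    using measurable_compose[OF measurable_stl Suc.IH] by simp
  have "Measurable.pred (stream_space (count_space UNIV)) (\<lambda>\<omega>. (\<lambda>e \<omega>. rw (rstep s e) (stl \<omega>) n = t) (shd \<omega>) \<omega>)"
    by (rule measurable_compose_countable'[where I=UNIV, OF A]) auto
  then show ?case by simp
qed

lemma meas_kap[measurable]: "smap (kap F) \<in> measurable (stream_space (measure_pmf N)) (stream_space (count_space UNIV))"
  by (rule measurable_smap) simp

lemma sum_UNIV_pair: "(\<Sum>e\<in>UNIV. g e) = (\<Sum>c\<in>UNIV. \<Sum>r\<in>UNIV. g (c, r))"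
  by (subst sum.cartesian_product) simp

lemma sum_UNIV4: "(\<Sum>e\<in>UNIV. g e) = (\<Sum>c\<in>UNIV. \<Sum>d\<in>UNIV. \<Sum>bu\<in>UNIV. \<Sum>bv\<in>UNIV. g (c, d, bu, bv :: bool))"
  by (simp only: sum_UNIV_pair[of g] sum_UNIV_pair[of "\<lambda>r. g (_, r)"] sum_UNIV_pair[of "\<lambda>r. g (_, _, r)"])

lemma FS:
  fixes G :: "(bool \<times> bool \<times> bool \<times> bool) stream \<Rightarrow> ennreal"
  assumes [measurable]: "G \<in> borel_measurable (stream_space (count_space UNIV))"
  shows "(\<integral>\<^sup>+\<omega>. G (smap (kap F) \<omega>) \<partial>stream_space (measure_pmf N))
       = (\<Sum>e\<in>UNIV. pmf (map_pmf (kap F) N) e * (\<integral>\<^sup>+\<omega>. G (e ## smap (kap F) \<omega>) \<partial>stream_space (measure_pmf N)))"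
proof -
  have "(\<integral>\<^sup>+\<omega>. G (smap (kap F) \<omega>) \<partial>stream_space (measure_pmf N))
      = (\<integral>\<^sup>+x. (\<integral>\<^sup>+X. G (smap (kap F) (x ## X)) \<partial>stream_space (measure_pmf N)) \<partial>measure_pmf N)"
    by (rule prob_space.nn_integral_stream_space[OF prob_space_measure_pmf]) measurable
  also have "\<dots> = (\<integral>\<^sup>+x. (\<lambda>e. \<integral>\<^sup>+X. G (e ## smap (kap F) X) \<partial>stream_space (measure_pmf N)) (kap F x) \<partial>measure_pmf N)"
    by simp
  also have "\<dots> = (\<integral>\<^sup>+e. (\<integral>\<^sup>+X. G (e ## smap (kap F) X) \<partial>stream_space (measure_pmf N)) \<partial>measure_pmf (map_pmf (kap F) N))"
    by (simp only: nn_integral_map_pmf)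
  also have "\<dots> = (\<Sum>e\<in>UNIV. (\<integral>\<^sup>+X. G (e ## smap (kap F) X) \<partial>stream_space (measure_pmf N)) * pmf (map_pmf (kap F) N) e)"
    by (rule nn_integral_measure_pmf_support) auto
  finally show ?thesis by (simp add: mult.commute)
qed



lemma pmf_f:
  assumes fin: "finite (carrier F)" and one: "\<one>\<^bsub>F\<^esub> \<in> carrier F"
  shows "pmf (map_pmf (\<lambda>u. u \<noteq> \<one>\<^bsub>F\<^esub>) (pmf_of_set (carrier F))) b = pq (1 / real (card (carrier F))) b"
proof -
  have ne: "carrier F \<noteq> {}" using one by auto
  have cpos: "0 < card (carrier F)" using fin ne by (simp add: card_gt_0_iff)
  have "pmf (map_pmf (\<lambda>u. u \<noteq> \<one>\<^bsub>F\<^esub>) (pmf_of_set (carrier F))) b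
      = real (card (carrier F \<inter> {u. (u \<noteq> \<one>\<^bsub>F\<^esub>) = b})) / real (card (carrier F))"
    using fin ne by (simp add: pmf_map measure_pmf_of_set vimage_def)
  also have "\<dots> = pq (1 / real (card (carrier F))) b"
  proof (cases b)
    case True
    have "carrier F \<inter> {u. (u \<noteq> \<one>\<^bsub>F\<^esub>) = b} = carrier F - {\<one>\<^bsub>F\<^esub>}" using True by auto
    moreover have "card (carrier F - {\<one>\<^bsub>F\<^esub>}) = card (carrier F) - 1" using one fin by simp
    ultimately show ?thesis using True cpos by (simp add: pq_def of_nat_diff field_simps)
  next
    case False
    have "carrier F \<inter> {u. (u \<noteq> \<one>\<^bsub>F\<^esub>) = b} = {\<one>\<^bsub>F\<^esub>}" using False one by auto
    then show ?thesis using False by (simp add: pq_def)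
  qed
  finally show ?thesis .
qed

lemma pmf_NR:
  assumes fin: "finite (carrier F)" and one: "\<one>\<^bsub>F\<^esub> \<in> carrier F" and p: "0 \<le> p" "p \<le> 1"
  shows "pmf (map_pmf (kap F) (lamp_noise F p)) (c, d, bu, bv)
     = pmf (bernoulli_pmf p) c * (1/2) * pq (1 / real (card (carrier F))) bu * pq (1 / real (card (carrier F))) bv"
proof -
  let ?f = "\<lambda>u. u \<noteq> \<one>\<^bsub>F\<^esub>"
  let ?U = "pmf_of_set (carrier F)"
  have k: "kap F = (\<lambda>(a, b). (id a, (\<lambda>(a', b'). (id a', (\<lambda>(u, v). (?f u, ?f v)) b')) b))"
    by (auto simp: kap_def fun_eq_iff)
  have "map_pmf (kap F) (lamp_noise F p)
     = pair_pmf (bernoulli_pmf p) (pair_pmf (bernoulli_pmf (1/2)) (pair_pmf (map_pmf ?f ?U) (map_pmf ?f ?U)))"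
    unfolding k lamp_noise_def map_pair by simp
  then show ?thesis using pmf_f[OF fin one] by (simp add: pmf_pair)
qed

definition W :: "('a, 'b) monoid_scheme \<Rightarrow> real \<Rightarrow> nat \<Rightarrow> int set \<times> int \<Rightarrow> ennreal" where
  "W F p n s = (\<integral>\<^sup>+\<omega>. indicator {\<omega>'. rw s \<omega>' n = ({}, 0)} (smap (kap F) \<omega>) \<partial>lamp_space F p)"

lemma prob_lamp: "prob_space (lamp_space F p)"
  unfolding lamp_space_def by (rule prob_space.prob_space_stream_space[OF prob_space_measure_pmf])

lemma Phi_nonneg: "0 \<le> p \<Longrightarrow> p \<le> 1 \<Longrightarrow> 0 \<le> q0 \<Longrightarrow> 0 \<le> Phi p q0 n s"
  unfolding Phi_def by (cases s) (auto intro!: Ex_nonneg)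

lemma mG: "(\<lambda>\<omega>'. indicator {\<omega>'. rw s \<omega>' m = t} \<omega>' :: ennreal) \<in> borel_measurable (stream_space (count_space UNIV))"
  unfolding indicator_def mem_Collect_eq by measurable

lemma Wformula:
  assumes fin: "finite (carrier F)" and one: "\<one>\<^bsub>F\<^esub> \<in> carrier F" and p: "0 \<le> p" "p \<le> 1"
  shows "W F p n s = ennreal (Phi p (1 / real (card (carrier F))) n s)"
proof (induction n arbitrary: s)
  case 0
  interpret P: prob_space "lamp_space F p" by (rule prob_lamp)
  obtain Z x where s: "s = (Z, x)" by (cases s)
  have "W F p 0 s = (if s = ({}, 0) then 1 else 0)"
    by (simp add: W_def P.emeasure_space_1)
  also have "\<dots> = ennreal (Phi p (1 / real (card (carrier F))) 0 s)"
    by (auto simp: s Phi_def Tset_def)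
  finally show ?case .
next
  case (Suc n)
  let ?q = "1 / real (card (carrier F))"
  let ?N = "lamp_noise F p"
  have "W F p (Suc n) s = (\<Sum>e\<in>UNIV. pmf (map_pmf (kap F) ?N) e *
      (\<integral>\<^sup>+\<omega>. indicator {\<omega>'. rw s \<omega>' (Suc n) = ({}, 0)} (e ## smap (kap F) \<omega>) \<partial>lamp_space F p))"
    unfolding W_def lamp_space_def by (rule FS) (rule mG)
  also have "\<dots> = (\<Sum>e\<in>UNIV. pmf (map_pmf (kap F) ?N) e * W F p n (rstep s e))"
    unfolding W_def by (simp add: indicator_def)
  also have "\<dots> = (\<Sum>e\<in>UNIV. ennreal (pmf (map_pmf (kap F) ?N) e * Phi p ?q n (rstep s e)))"
    using Suc p by (simp add: ennreal_mult'' Phi_nonneg)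
  also have "\<dots> = ennreal (\<Sum>e\<in>UNIV. pmf (map_pmf (kap F) ?N) e * Phi p ?q n (rstep s e))"
    using p by (intro sum_ennreal) (auto intro!: mult_nonneg_nonneg Phi_nonneg)
  also have "(\<Sum>e\<in>UNIV. pmf (map_pmf (kap F) ?N) e * Phi p ?q n (rstep s e)) = Phi p ?q (Suc n) s"
  proof -
    obtain Z x where s: "s = (Z, x)" by (cases s)
    show ?thesis
      unfolding sum_UNIV4 pmf_NR[OF fin one p] s by (rule PhiRec[OF p])
  qed
  finally show ?case .
qed



lemma WSuc: "W F p (Suc n) s = (\<Sum>e\<in>UNIV. pmf (map_pmf (kap F) (lamp_noise F p)) e * W F p n (rstep s e))"
proof -
  have "W F p (Suc n) s = (\<Sum>e\<in>UNIV. pmf (map_pmf (kap F) (lamp_noise F p)) e *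
      (\<integral>\<^sup>+\<omega>. indicator {\<omega>'. rw s \<omega>' (Suc n) = ({}, 0)} (e ## smap (kap F) \<omega>) \<partial>lamp_space F p))"
    unfolding W_def lamp_space_def by (rule FS) (rule mG)
  also have "\<dots> = (\<Sum>e\<in>UNIV. pmf (map_pmf (kap F) (lamp_noise F p)) e * W F p n (rstep s e))"
    unfolding W_def by (simp add: indicator_def)
  finally show ?thesis .
qed

lemma W0: "W F p 0 s = (if s = ({}, 0) then 1 else 0)"
proof -
  interpret P: prob_space "lamp_space F p" by (rule prob_lamp)
  show ?thesis by (simp add: W_def P.emeasure_space_1)
qed

lemma suminf_indicator_infinite:
  assumes "infinite A"
  shows "(\<Sum>n. indicator A n :: ennreal) = \<infinity>"
proof -
  have "(\<Sum>n. indicator A n :: ennreal) = (\<integral>\<^sup>+n. indicator A n \<partial>count_space UNIV)"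
    by (rule nn_integral_count_space_nat[symmetric])
  also have "\<dots> = emeasure (count_space UNIV) A" by (rule nn_integral_indicator) simp
  also have "\<dots> = \<infinity>" using assms by simp
  finally show ?thesis .
qed

lemma transient_main:
  assumes fin: "finite (carrier F)" and one: "\<one>\<^bsub>F\<^esub> \<in> carrier F" and p: "1/2 < p" "p < 1"
    and q: "1 / real (card (carrier F)) * sqrt (p / (1 - p)) < 1"
  shows "lamp_transient F p"
proof -
  define q0 where "q0 = 1 / real (card (carrier F))"
  have q0: "0 \<le> q0" "q0 \<le> 1"
  proof -
    have "carrier F \<noteq> {}" using one by auto
    then have "1 \<le> card (carrier F)" using fin by (simp add: Suc_le_eq card_gt_0_iff)
    then show "0 \<le> q0" "q0 \<le> 1" by (auto simp: q0_def)
  qed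
  have p01: "0 \<le> p" "p \<le> 1" using p by auto
  obtain C where C: "\<And>N. (\<Sum>n<N. uu p q0 n) \<le> C"
    using TS[OF p refl q0] q by (auto simp: q0_def)
  have uW: "W F p n ({}, 0) = ennreal (uu p q0 n)" for n
    using Wformula[OF fin one p01] by (simp add: q0_def uu_def Phi_def)
  have unn: "0 \<le> uu p q0 n" for n unfolding uu_def using q0 p01 by (intro Ex_nonneg) auto
  have sumW: "(\<Sum>n. W F p n ({}, 0)) \<noteq> \<infinity>"
  proof -
    have s1: "(\<Sum>n. W F p n ({}, 0)) = (\<Sum>n. ennreal (uu p q0 n))" by (simp only: uW)
    have s2: "(\<Sum>n. ennreal (uu p q0 n)) \<le> ennreal C"
    proof (rule suminf_le_const)
      show "summable (\<lambda>n. ennreal (uu p q0 n))" by (rule summableI)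
      fix N
      have "(\<Sum>n<N. ennreal (uu p q0 n)) = ennreal (\<Sum>n<N. uu p q0 n)" by (rule sum_ennreal) (rule unn)
      also have "\<dots> \<le> ennreal C" by (rule ennreal_leI[OF C])
      finally show "(\<Sum>n<N. ennreal (uu p q0 n)) \<le> ennreal C" .
    qed
    have "(\<Sum>n. W F p n ({}, 0)) < Orderings.top" unfolding s1 using s2 ennreal_less_top by (rule le_less_trans)
    then show ?thesis by simp
  qed
  define f where "f \<omega> = (\<Sum>n. indicator {\<omega>'. rw ({}, 0) \<omega>' n = ({}, 0)} (smap (kap F) \<omega>) :: ennreal)" for \<omega>
  have fm: "f \<in> borel_measurable (lamp_space F p)"
    unfolding f_def lamp_space_def
    by (rule borel_measurable_suminf_order) (rule measurable_compose[OF meas_kap mG])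
  have "(\<integral>\<^sup>+\<omega>. f \<omega> \<partial>lamp_space F p) = (\<Sum>n. W F p n ({}, 0))"
    unfolding f_def W_def lamp_space_def
    by (rule nn_integral_suminf) (rule measurable_compose[OF meas_kap mG])
  then have "AE \<omega> in lamp_space F p. f \<omega> \<noteq> \<infinity>"
    using sumW fm by (intro nn_integral_PInf_AE) auto
  then show ?thesis
    unfolding lamp_transient_def
  proof (rule AE_mp, intro AE_I2 impI)
    fix \<omega> assume "f \<omega> \<noteq> \<infinity>"
    moreover have "f \<omega> = (\<Sum>n. indicator {n. lamp_walk F \<omega> n = lamp_id F} n)"
      unfolding f_def by (simp add: indicator_def lamp_iff)
    ultimately show "finite {n. lamp_walk F \<omega> n = lamp_id F}"
      using suminf_indicator_infinite by fastforce
  qed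
qed



lemma recurrent_main:
  assumes fin: "finite (carrier F)" and one: "\<one>\<^bsub>F\<^esub> \<in> carrier F" and p: "1/2 < p" "p < 1"
    and m2: "2 \<le> card (carrier F)"
    and q: "1 \<le> (1 / real (card (carrier F)))^2 * (p / (1 - p))"
  shows "lamp_recurrent F p"
proof -
  define q0 where "q0 = 1 / real (card (carrier F))"
  have q0: "0 < q0" "q0 < 1" using m2 by (auto simp: q0_def)
  have p01: "0 \<le> p" "p \<le> 1" using p by auto
  let ?M = "lamp_space F p"
  let ?id = "({}, 0) :: int set \<times> int"
  interpret P: prob_space ?M by (rule prob_lamp)
  have uW: "W F p n ?id = ennreal (uu p q0 n)" for n
    using Wformula[OF fin one p01] by (simp add: q0_def uu_def Phi_def)
  have unn: "0 \<le> uu p q0 n" for n unfolding uu_def using q0 p01 by (intro Ex_nonneg) auto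
  have sumW: "(\<Sum>n. W F p n ?id) = \<infinity>"
  proof -
    have low: "ennreal K \<le> (\<Sum>n. W F p n ?id)" for K
    proof -
      obtain N where N: "K \<le> (\<Sum>n<N. uu p q0 n)"
        using RS[OF p refl q0] q by (auto simp: q0_def)
      have "ennreal K \<le> ennreal (\<Sum>n<N. uu p q0 n)" using N by (rule ennreal_leI)
      also have "\<dots> = (\<Sum>n<N. ennreal (uu p q0 n))" by (rule sum_ennreal[symmetric]) (rule unn)
      also have "\<dots> \<le> (\<Sum>n. ennreal (uu p q0 n))" by (rule sum_le_suminf) (auto intro: summableI)
      finally show ?thesis by (simp only: uW)
    qed
    show ?thesis
    proof (rule ccontr)
      assume "(\<Sum>n. W F p n ?id) \<noteq> \<infinity>"
      then obtain x where x: "(\<Sum>n. W F p n ?id) = ennreal x" "0 \<le> x" by (cases "(\<Sum>n. W F p n ?id)") auto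
      have "ennreal (x + 1) \<le> ennreal x" using low[of "x+1"] x by simp
      then have "x + 1 \<le> x" using x by (simp add: ennreal_le_iff)
      then show False by simp
    qed
  qed
  define B where "B = {\<omega>'. \<forall>k. 0 < k \<longrightarrow> rw ?id \<omega>' k \<noteq> ?id}"
  define Hn where "Hn n s = (\<integral>\<^sup>+\<omega>. indicator {\<omega>'. rw s \<omega>' n = ?id \<and> sdrop n \<omega>' \<in> B} (smap (kap F) \<omega>) \<partial>?M)" for n s
  define beta where "beta = (\<integral>\<^sup>+\<omega>. indicator B (smap (kap F) \<omega>) \<partial>?M)"
  have mH: "(\<lambda>\<omega>'. indicator {\<omega>'. rw s \<omega>' n = ?id \<and> sdrop n \<omega>' \<in> B} \<omega>' :: ennreal) \<in> borel_measurable (stream_space (count_space UNIV))" for s n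
    unfolding indicator_def mem_Collect_eq B_def by measurable
  have HW: "Hn n s = W F p n s * beta" for n s
  proof (induction n arbitrary: s)
    case 0
    show ?case
      by (cases "s = ?id") (simp_all add: Hn_def W0 beta_def indicator_def)
  next
    case (Suc n)
    have "Hn (Suc n) s = (\<Sum>e\<in>UNIV. pmf (map_pmf (kap F) (lamp_noise F p)) e *
      (\<integral>\<^sup>+\<omega>. indicator {\<omega>'. rw s \<omega>' (Suc n) = ?id \<and> sdrop (Suc n) \<omega>' \<in> B} (e ## smap (kap F) \<omega>) \<partial>?M))"
      unfolding Hn_def lamp_space_def by (rule FS) (rule mH)
    also have "\<dots> = (\<Sum>e\<in>UNIV. pmf (map_pmf (kap F) (lamp_noise F p)) e * Hn n (rstep s e))"
      unfolding Hn_def by (simp add: indicator_def)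
    also have "\<dots> = (\<Sum>e\<in>UNIV. pmf (map_pmf (kap F) (lamp_noise F p)) e * W F p n (rstep s e)) * beta"
      by (simp add: Suc sum_distrib_right mult.assoc)
    also have "\<dots> = W F p (Suc n) s * beta" by (simp add: WSuc)
    finally show ?case .
  qed
  define An where "An n = {\<omega> \<in> space ?M. rw ?id (smap (kap F) \<omega>) n = ?id \<and> sdrop n (smap (kap F) \<omega>) \<in> B}" for n
  have Ansets: "An n \<in> sets ?M" for n
    unfolding An_def B_def lamp_space_def by measurable
  have spM: "space ?M = UNIV" by (simp add: lamp_space_def space_stream_space)
  have HA: "Hn n ?id = emeasure ?M (An n)" for n
  proof -
    have "Hn n ?id = (\<integral>\<^sup>+\<omega>. indicator (An n) \<omega> \<partial>?M)"
      unfolding Hn_def An_def spM by (intro nn_integral_cong) (simp add: indicator_def)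
    also have "\<dots> = emeasure ?M (An n)" by (rule nn_integral_indicator[OF Ansets])
    finally show ?thesis .
  qed
  have disj: "disjoint_family An"
    unfolding disjoint_family_on_def
  proof (intro ballI impI)
    fix n m assume "n \<in> (UNIV :: nat set)" "m \<in> (UNIV :: nat set)" "n \<noteq> m"
    show "An n \<inter> An m = {}"
    proof (rule ccontr)
      assume "An n \<inter> An m \<noteq> {}"
      then obtain \<omega> where w: "\<omega> \<in> An n" "\<omega> \<in> An m" by auto
      let ?w = "smap (kap F) \<omega>"
      have key: "False" if "a < b" "\<omega> \<in> An a" "\<omega> \<in> An b" for a b
      proof -
        have ra: "rw ?id ?w a = ?id" "sdrop a ?w \<in> B" using that(2) by (auto simp: An_def)
        have "rw ?id ?w b = ?id" using that(3) by (auto simp: An_def)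
        moreover have "rw ?id ?w b = rw ?id (sdrop a ?w) (b - a)"
          using rw_add[of ?id ?w a "b - a"] ra(1) that(1) by simp
        moreover have "rw ?id (sdrop a ?w) (b - a) \<noteq> ?id" using ra(2) that(1) by (auto simp: B_def)
        ultimately show False by simp
      qed
      show False using \<open>n \<noteq> m\<close> key[of n m] key[of m n] w by (cases "n < m") auto
    qed
  qed
  have "emeasure ?M (\<Union>n. An n) = (\<Sum>n. emeasure ?M (An n))"
    using Ansets disj by (intro suminf_emeasure[symmetric]) auto
  also have "\<dots> = (\<Sum>n. beta * W F p n ?id)" by (simp add: HA[symmetric] HW mult.commute)
  also have "\<dots> = beta * (\<Sum>n. W F p n ?id)" by (rule ennreal_suminf_cmult)
  also have "\<dots> = beta * \<infinity>" by (simp add: sumW)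
  finally have E: "emeasure ?M (\<Union>n. An n) = beta * \<infinity>" .
  have "emeasure ?M (\<Union>n. An n) \<le> 1"
    using P.emeasure_space_1 Ansets by (metis P.emeasure_le_1)
  then have "beta = 0" using E by (cases "beta = 0") (auto simp: ennreal_mult_top)
  then have null: "(\<Union>n. An n) \<in> null_sets ?M" using E Ansets by (auto intro!: null_setsI)
  show ?thesis
    unfolding lamp_recurrent_def
  proof (rule AE_I'[OF null])
    show "{\<omega> \<in> space ?M. \<not> infinite {n. lamp_walk F \<omega> n = lamp_id F}} \<subseteq> (\<Union>n. An n)"
    proof
      fix \<omega> assume "\<omega> \<in> {\<omega> \<in> space ?M. \<not> infinite {n. lamp_walk F \<omega> n = lamp_id F}}"
      then have fin: "finite {n. rw ?id (smap (kap F) \<omega>) n = ?id}" by (simp add: lamp_iff)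
      let ?w = "smap (kap F) \<omega>"
      let ?S = "{n. rw ?id ?w n = ?id}"
      have "0 \<in> ?S" by simp
      define n0 where "n0 = Max ?S"
      have ne: "?S \<noteq> {}" using \<open>0 \<in> ?S\<close> by blast
      have n0: "n0 \<in> ?S" unfolding n0_def by (rule Max_in[OF fin ne])
      have "sdrop n0 ?w \<in> B"
        unfolding B_def
      proof (intro CollectI allI impI)
        fix k :: nat assume k: "0 < k"
        have "rw ?id (sdrop n0 ?w) k = rw ?id ?w (n0 + k)" using rw_add[of ?id ?w n0 k] n0 by simp
        moreover have "n0 + k \<notin> ?S"
        proof
          assume "n0 + k \<in> ?S"
          then have "n0 + k \<le> n0" unfolding n0_def using fin by (intro Max_ge) auto
          then show False using k by simp
        qed
        ultimately show "rw ?id (sdrop n0 ?w) k \<noteq> ?id" by simp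
      qed
      then have "\<omega> \<in> An n0" using n0 by (simp add: An_def spM)
      then show "\<omega> \<in> (\<Union>n. An n)" by auto
    qed
  qed
qed



lemma ar1:
  fixes M p :: real
  assumes M: "0 < M" and p: "p < 1" and h: "M^2 / (M^2 + 1) \<le> p"
  shows "1 \<le> (1 / M)^2 * (p / (1 - p))"
proof -
  have pos: "0 < M^2 + 1" using M by (simp add: add_pos_pos)
  have "M^2 \<le> p * (M^2 + 1)" using h pos_divide_le_eq[OF pos] by simp
  then have "M^2 * (1 - p) \<le> p" by (simp add: algebra_simps)
  then have "M^2 \<le> p / (1 - p)" using p by (simp add: pos_le_divide_eq)
  moreover have M2: "0 < M^2" using M by simp
  ultimately have "1 * M^2 \<le> p / (1 - p)" by simp
  then have "1 \<le> (p / (1 - p)) / M^2" by (rule iffD2[OF pos_le_divide_eq[OF M2]])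
  moreover have "(p / (1 - p)) / M^2 = (1 / M)^2 * (p / (1 - p))" by (simp add: power_divide)
  ultimately show ?thesis by simp
qed

lemma ar2:
  fixes M p :: real
  assumes M: "0 < M" and p: "p < 1" and h: "p < M^2 / (M^2 + 1)"
  shows "1 / M * sqrt (p / (1 - p)) < 1"
proof -
  have pos: "0 < M^2 + 1" using M by (simp add: add_pos_pos)
  have "p * (M^2 + 1) < M^2" using h pos_less_divide_eq[OF pos] by simp
  then have "p < M^2 * (1 - p)" by (simp add: algebra_simps)
  then have "p / (1 - p) < M^2" using p by (simp add: pos_divide_less_eq)
  then have "sqrt (p / (1 - p)) < sqrt (M^2)" by (simp only: real_sqrt_less_iff)
  then have "sqrt (p / (1 - p)) < M" using M by simp
  then show ?thesis using M by (simp add: divide_less_eq)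
qed

theorem theorem1p1:
  fixes F :: "('a, 'b) monoid_scheme" and p :: real
  assumes "group F" and "finite (carrier F)" and "carrier F \<noteq> {\<one>\<^bsub>F\<^esub>}"
    and "1/2 < p" and "p < 1"
  shows "(p \<ge> real (card (carrier F))^2 / (real (card (carrier F))^2 + 1) \<longrightarrow> lamp_recurrent F p)
       \<and> (p < real (card (carrier F))^2 / (real (card (carrier F))^2 + 1) \<longrightarrow> lamp_transient F p)"
proof -
  have one: "\<one>\<^bsub>F\<^esub> \<in> carrier F" using assms(1) by (simp add: group.is_monoid monoid.one_closed)
  obtain g where g: "g \<in> carrier F" "g \<noteq> \<one>\<^bsub>F\<^esub>" using assms(3) one by blast
  have "card {\<one>\<^bsub>F\<^esub>, g} \<le> card (carrier F)" using one g assms(2) by (intro card_mono) auto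
  then have m2: "2 \<le> card (carrier F)" using g by simp
  have M: "0 < real (card (carrier F))" using m2 by simp
  show ?thesis
  proof (intro conjI impI)
    assume h: "real (card (carrier F))^2 / (real (card (carrier F))^2 + 1) \<le> p"
    show "lamp_recurrent F p"
      by (rule recurrent_main[OF assms(2) one assms(4,5) m2 ar1[OF M assms(5) h]])
  next
    assume h: "p < real (card (carrier F))^2 / (real (card (carrier F))^2 + 1)"
    show "lamp_transient F p"
      by (rule transient_main[OF assms(2) one assms(4,5) ar2[OF M assms(5) h]])
  qed
qed


end
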